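(* Let $r>0$, let $\Theta\subset\mathbb{R}^d$ be compact and convex, and let $\{p(\cdot\mid\boldsymbol{\rho}):\boldsymbol{\rho}\in\Theta\}$ be a parametric family of densities on a sample space $\Omega$ such that for every $z\in\Omega$, $\boldsymbol{\rho}\mapsto\log p(z\mid\boldsymbol{\rho})$ is twice differentiable on an open set containing $\Theta$ and satisfies $\lambda_{\min}(-\nabla^2_{\boldsymbol{\rho}}\log p(z\mid\boldsymbol{\rho}))\ge\sigma^2$ for all $\boldsymbol{\rho}\in\Theta$, for some $\sigma^2>0$. Let $\boldsymbol{\theta}\in\Theta$ and let $\boldsymbol{Z}_1,\boldsymbol{Z}_2,\dots$ be i.i.d. with density $p(\cdot\mid\boldsymbol{\theta})$, distributed as $\boldsymbol{Z}$. Assume $\mathbb{E}[\nabla_{\boldsymbol{\rho}}\log p(\boldsymbol{Z}\mid\boldsymbol{\rho})|_{\boldsymbol{\rho}=\boldsymbol{\theta}}]=0$ and $\mathbb{E}[\|\nabla_{\boldsymbol{\rho}}\log p(\boldsymbol{Z}\mid\boldsymbol{\rho})|_{\boldsymbol{\rho}=\boldsymbol{\theta}}\|^{r+1}]<\infty$. Let $L_t(\boldsymbol{\rho})=\sum_{s=1}^t\log p(\boldsymbol{Z}_s\mid\boldsymbol{\rho})$ and $\boldsymbol{\theta}_t=\arg\max_{\boldsymbol{\rho}\in\Theta}L_t(\boldsymbol{\rho})$. Then $\boldsymbol{\theta}_t$ converges $r$-quickly to $\boldsymbol{\theta}$.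
   Context: A sequence of random vectors $\boldsymbol{Z}_t$ converges $r$-quickly to $\boldsymbol{Z}$ if for every $\epsilon>0$, $\mathbb{E}[L_\epsilon^r]<\infty$, where $L_\epsilon:=\sup\{t\in\mathbb{N}:\|\boldsymbol{Z}_t-\boldsymbol{Z}\|>\epsilon\}$ (with $\sup\emptyset=0$). $\lambda_{\min}$ denotes the smallest eigenvalue; $\|\cdot\|$ is the Euclidean norm. *)

theory Defs
  imports "HOL-Probability.Probability"
begin

definition real_eigenvalues :: "real^'n^'n \<Rightarrow> real set" where
  "real_eigenvalues A = {c. \<exists>v. v \<noteq> 0 \<and> A *v v = c *\<^sub>R v}"

definition lambda_min :: "real^'n^'n \<Rightarrow> real" where
  "lambda_min A = Min (real_eigenvalues A)"

text \<open>L_eps = sup of indices t (t \<ge> 1) with norm (X_t - Y) > eps, sup of empty set = 0.\<close>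
definition last_exit :: "real \<Rightarrow> (nat \<Rightarrow> 'o \<Rightarrow> 'b::real_normed_vector) \<Rightarrow> ('o \<Rightarrow> 'b) \<Rightarrow> 'o \<Rightarrow> nat set" where
  "last_exit eps X Y \<omega> = {t. 1 \<le> t \<and> norm (X t \<omega> - Y \<omega>) > eps}"

definition last_exit_pow :: "real \<Rightarrow> real \<Rightarrow> (nat \<Rightarrow> 'o \<Rightarrow> 'b::real_normed_vector) \<Rightarrow> ('o \<Rightarrow> 'b) \<Rightarrow> 'o \<Rightarrow> ennreal" where
  "last_exit_pow r eps X Y \<omega> =
     (if finite (last_exit eps X Y \<omega>) then ennreal (real (Sup (last_exit eps X Y \<omega>)) powr r) else \<infinity>)"

definition r_quickly :: "'o measure \<Rightarrow> real \<Rightarrow> (nat \<Rightarrow> 'o \<Rightarrow> 'b::real_normed_vector) \<Rightarrow> ('o \<Rightarrow> 'b) \<Rightarrow> bool" where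
  "r_quickly M r X Y \<longleftrightarrow> (\<forall>eps>0. (\<integral>\<^sup>+ \<omega>. last_exit_pow r eps X Y \<omega> \<partial>M) < \<infinity>)"

end

theory Submission
  imports Defs
begin

lemma exp_quad_bound:
  fixes x :: real assumes "\<bar>x\<bar> \<le> 1" shows "exp x \<le> 1 + x + x\<^sup>2"
proof (cases "x \<ge> 0")
  case True thus ?thesis using exp_bound[of x] assms by auto
next
  case False
  define y where "y = - x"
  have y: "0 \<le> y" "y \<le> 1" using False assms by (auto simp: y_def)
  have q: "1 + y + y\<^sup>2 / 2 \<le> exp y" using exp_lower_Taylor_quadratic[OF y(1)] .
  have pos: "0 < 1 + y + y\<^sup>2 / 2" using y by (simp add: add_pos_nonneg)
  have key: "1 \<le> (1 + y + y\<^sup>2 / 2) * (1 - y + y\<^sup>2)"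
  proof -
    have "(1 + y + y\<^sup>2 / 2) * (1 - y + y\<^sup>2) = 1 + y\<^sup>2/2 + y^3/2 + y^4/2"
      by (simp add: field_simps power2_eq_square power3_eq_cube power4_eq_xxxx)
    moreover have "0 \<le> y\<^sup>2/2 + y^3/2 + y^4/2" using y by simp
    ultimately show ?thesis by linarith
  qed
  have e2: "1 - y + y\<^sup>2 = (y - 1/2)\<^sup>2 + 3/4" by (simp add: power2_eq_square field_simps)
  have pos2: "0 < 1 - y + y\<^sup>2" unfolding e2 by (simp add: add_nonneg_pos)
  have "exp x = inverse (exp y)" by (simp add: y_def exp_minus)
  also have "\<dots> \<le> inverse (1 + y + y\<^sup>2 / 2)" using q pos by (intro le_imp_inverse_le) auto
  also have "\<dots> \<le> 1 - y + y\<^sup>2"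
    using key pos pos2 by (simp add: field_simps)
  finally show ?thesis by (simp add: y_def)
qed


lemma (in prob_space) mgf_bound_single:
  assumes Wm: "W \<in> borel_measurable M"
    and bnd: "\<And>\<omega>. \<omega> \<in> space M \<Longrightarrow> \<bar>W \<omega>\<bar> \<le> b"
    and mean: "expectation W = 0"
    and var: "expectation (\<lambda>\<omega>. (W \<omega>)\<^sup>2) \<le> v"
    and l: "l > 0" "l * b \<le> 1"
  shows "(\<integral>\<^sup>+\<omega>. ennreal (exp (l * W \<omega>)) \<partial>M) \<le> ennreal (exp (l\<^sup>2 * v))"
proof -
  have iW: "integrable M W"
    by (rule integrable_const_bound[where B=b]) (use bnd Wm in auto)
  have iW2: "integrable M (\<lambda>\<omega>. (W \<omega>)\<^sup>2)"
  proof (rule integrable_const_bound[where B="b\<^sup>2"])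
    show "AE x in M. norm ((W x)\<^sup>2) \<le> b\<^sup>2"
      using bnd by (auto intro!: AE_I2 simp: abs_le_square_iff[symmetric] power_abs)
           (metis abs_le_square_iff abs_of_nonneg bnd abs_ge_zero order_trans power2_abs)
  qed (use Wm in auto)
  have pt: "exp (l * W \<omega>) \<le> 1 + l * W \<omega> + l\<^sup>2 * (W \<omega>)\<^sup>2" if "\<omega> \<in> space M" for \<omega>
  proof -
    have "\<bar>l * W \<omega>\<bar> \<le> 1"
    proof -
      have "\<bar>l * W \<omega>\<bar> = l * \<bar>W \<omega>\<bar>" using l by (simp add: abs_mult)
      also have "\<dots> \<le> l * b" using bnd[OF that] l by (intro mult_left_mono) auto
      finally show ?thesis using l by linarith
    qed
    from exp_quad_bound[OF this] show ?thesis by (simp add: power_mult_distrib)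
  qed
  have "(\<integral>\<^sup>+\<omega>. ennreal (exp (l * W \<omega>)) \<partial>M) \<le> (\<integral>\<^sup>+\<omega>. ennreal (1 + l * W \<omega> + l\<^sup>2 * (W \<omega>)\<^sup>2) \<partial>M)"
    by (intro nn_integral_mono ennreal_leI pt)
  also have "\<dots> = ennreal (\<integral>\<omega>. 1 + l * W \<omega> + l\<^sup>2 * (W \<omega>)\<^sup>2 \<partial>M)"
  proof (rule nn_integral_eq_integral)
    show "integrable M (\<lambda>\<omega>. 1 + l * W \<omega> + l\<^sup>2 * (W \<omega>)\<^sup>2)"
      using iW iW2 by auto
    show "AE x in M. 0 \<le> 1 + l * W x + l\<^sup>2 * (W x)\<^sup>2"
      using pt by (auto intro!: AE_I2 order_trans[OF less_imp_le[OF exp_gt_zero]])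
  qed
  also have "(\<integral>\<omega>. 1 + l * W \<omega> + l\<^sup>2 * (W \<omega>)\<^sup>2 \<partial>M) = 1 + l * expectation W + l\<^sup>2 * expectation (\<lambda>\<omega>. (W \<omega>)\<^sup>2)"
    using iW iW2 by (simp add: prob_space)
  also have "\<dots> \<le> 1 + l\<^sup>2 * v" using mean var by (simp add: mult_left_mono)
  also have "\<dots> \<le> exp (l\<^sup>2 * v)" by (rule exp_ge_add_one_self[of "l\<^sup>2 * v", simplified add.commute])
  finally show ?thesis by (simp add: ennreal_leI)
qed

lemma (in prob_space) bernstein_tail:
  assumes fin: "finite I" and ind: "indep_vars (\<lambda>_. borel) W I"
    and bnd: "\<And>i \<omega>. i \<in> I \<Longrightarrow> \<omega> \<in> space M \<Longrightarrow> \<bar>W i \<omega>\<bar> \<le> b"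
    and mean: "\<And>i. i \<in> I \<Longrightarrow> expectation (W i) = 0"
    and var: "\<And>i. i \<in> I \<Longrightarrow> expectation (\<lambda>\<omega>. (W i \<omega>)\<^sup>2) \<le> v"
    and l: "l > 0" "l * b \<le> 1"
  shows "prob {\<omega>\<in>space M. x \<le> (\<Sum>i\<in>I. W i \<omega>)} \<le> exp (- l * x + real (card I) * (l\<^sup>2 * v))"
proof -
  have Wm[measurable]: "W i \<in> borel_measurable M" if "i \<in> I" for i
    using ind that unfolding indep_vars_def by blast
  have "ennreal (prob {\<omega>\<in>space M. x \<le> (\<Sum>i\<in>I. W i \<omega>)}) = emeasure M {\<omega>\<in>space M. (\<Sum>i\<in>I. W i \<omega>) \<ge> x}"
    by (simp add: emeasure_eq_measure)
  also have "\<dots> \<le> ennreal (exp (-l * x)) * (\<integral>\<^sup>+\<omega>. ennreal (exp (l * (\<Sum>i\<in>I. W i \<omega>))) * indicator (space M) \<omega> \<partial>M)"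
    by (intro Chernoff_ineq_nn_integral_ge l) (use fin in auto)
  also have "(\<integral>\<^sup>+\<omega>. ennreal (exp (l * (\<Sum>i\<in>I. W i \<omega>))) * indicator (space M) \<omega> \<partial>M)
      = (\<integral>\<^sup>+\<omega>. (\<Prod>i\<in>I. ennreal (exp (l * W i \<omega>))) \<partial>M)"
    by (intro nn_integral_cong)
       (simp_all add: sum_distrib_left exp_sum fin prod_ennreal)
  also have "\<dots> = (\<Prod>i\<in>I. \<integral>\<^sup>+\<omega>. ennreal (exp (l * W i \<omega>)) \<partial>M)"
    by (intro indep_vars_nn_integral fin indep_vars_compose2[OF ind]) auto
  also have "ennreal (exp (-l * x)) * \<dots> \<le> ennreal (exp (-l * x)) * (\<Prod>i\<in>I. ennreal (exp (l\<^sup>2 * v)))"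
    by (intro mult_left_mono prod_mono_ennreal mgf_bound_single[OF _ _ _ _ l]) (auto intro: bnd mean var)
  also have "\<dots> = ennreal (exp (-l * x) * exp (l\<^sup>2 * v) ^ card I)"
    by (simp add: prod_ennreal ennreal_mult ennreal_power)
  also have "exp (-l * x) * exp (l\<^sup>2 * v) ^ card I = exp (- l * x + real (card I) * (l\<^sup>2 * v))"
    by (simp add: exp_add[symmetric] exp_of_nat_mult[symmetric])
  finally show ?thesis by (subst (asm) ennreal_le_iff) auto
qed


locale iid_seq = prob_space M for M :: "'a measure" +
  fixes Y :: "nat \<Rightarrow> 'a \<Rightarrow> real" and Y0 :: "'a \<Rightarrow> real" and r :: real
  assumes r_pos: "r > 0"
    and indepY: "indep_vars (\<lambda>_. borel) Y {1..}"
    and Y0m[measurable]: "Y0 \<in> borel_measurable M"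
    and distr_eq: "\<And>s. s \<ge> 1 \<Longrightarrow> distr M borel (Y s) = distr M borel Y0"
    and mom: "integrable M (\<lambda>\<omega>. \<bar>Y0 \<omega>\<bar> powr (r+1))"
    and mean0: "expectation Y0 = 0"
begin

lemma Ym: "s \<ge> 1 \<Longrightarrow> Y s \<in> borel_measurable M"
  using indepY unfolding indep_vars_def by auto

lemma YSm[measurable]: "Y (Suc j) \<in> borel_measurable M"
  by (rule Ym) simp

lemma transfer_nn:
  assumes "s \<ge> 1" "f \<in> borel_measurable borel"
  shows "(\<integral>\<^sup>+\<omega>. f (Y s \<omega>) \<partial>M) = (\<integral>\<^sup>+\<omega>. f (Y0 \<omega>) \<partial>M)"
proof -
  have "(\<integral>\<^sup>+\<omega>. f (Y s \<omega>) \<partial>M) = integral\<^sup>N (distr M borel (Y s)) f"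
    using assms by (subst nn_integral_distr) (auto intro: Ym)
  also have "\<dots> = integral\<^sup>N (distr M borel Y0) f" using distr_eq[OF assms(1)] by simp
  also have "\<dots> = (\<integral>\<^sup>+\<omega>. f (Y0 \<omega>) \<partial>M)"
    using assms by (subst nn_integral_distr) (auto intro: Ym)
  finally show ?thesis .
qed

lemma transfer_int:
  fixes f :: "real \<Rightarrow> real"
  assumes "s \<ge> 1" "f \<in> borel_measurable borel"
  shows "(\<integral>\<omega>. f (Y s \<omega>) \<partial>M) = (\<integral>\<omega>. f (Y0 \<omega>) \<partial>M)"
proof -
  have "(\<integral>\<omega>. f (Y s \<omega>) \<partial>M) = integral\<^sup>L (distr M borel (Y s)) f"
    using assms by (subst integral_distr) (auto intro: Ym)
  also have "\<dots> = integral\<^sup>L (distr M borel Y0) f" using distr_eq[OF assms(1)] by simp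
  also have "\<dots> = (\<integral>\<omega>. f (Y0 \<omega>) \<partial>M)"
    using assms by (subst integral_distr) (auto intro: Ym)
  finally show ?thesis .
qed

definition K0 where "K0 = (\<integral>\<omega>. \<bar>Y0 \<omega>\<bar> powr (r+1) \<partial>M)"

lemma K0_nonneg: "K0 \<ge> 0" unfolding K0_def by (rule integral_nonneg_AE) auto

lemma nn_mom: "(\<integral>\<^sup>+\<omega>. ennreal (\<bar>Y0 \<omega>\<bar> powr (r+1)) \<partial>M) = ennreal K0"
  unfolding K0_def by (rule nn_integral_eq_integral[OF mom]) auto

lemma sum_a_pointwise:
  fixes d y :: real assumes d: "d > 0"
  shows "(\<Sum>j. ennreal (real (Suc j) powr r + (\<bar>y\<bar> / d) powr r) * indicator {y. d * real (Suc j) < \<bar>y\<bar>} y)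
         \<le> ennreal (2 * (\<bar>y\<bar> / d) powr (r + 1))"
proof -
  define N where "N = nat \<lfloor>\<bar>y\<bar> / d\<rfloor>"
  have zero: "ennreal (real (Suc j) powr r + (\<bar>y\<bar> / d) powr r) * indicator {y. d * real (Suc j) < \<bar>y\<bar>} y = 0"
    if "j \<notin> {..<N}" for j
  proof -
    have "\<not> d * real (Suc j) < \<bar>y\<bar>"
    proof
      assume h: "d * real (Suc j) < \<bar>y\<bar>"
      hence "real (Suc j) < \<bar>y\<bar> / d" using d by (simp add: field_simps)
      hence "Suc j \<le> N" unfolding N_def by linarith
      thus False using that by simp
    qed
    thus ?thesis by simp
  qed
  have "(\<Sum>j. ennreal (real (Suc j) powr r + (\<bar>y\<bar> / d) powr r) * indicator {y. d * real (Suc j) < \<bar>y\<bar>} y)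
      = (\<Sum>j<N. ennreal (real (Suc j) powr r + (\<bar>y\<bar> / d) powr r) * indicator {y. d * real (Suc j) < \<bar>y\<bar>} y)"
    by (rule suminf_finite) (use zero in auto)
  also have "\<dots> \<le> (\<Sum>j<N. ennreal (2 * (\<bar>y\<bar> / d) powr r))"
  proof (rule sum_mono)
    fix j assume "j \<in> {..<N}"
    show "ennreal (real (Suc j) powr r + (\<bar>y\<bar> / d) powr r) * indicator {y. d * real (Suc j) < \<bar>y\<bar>} y
          \<le> ennreal (2 * (\<bar>y\<bar> / d) powr r)"
    proof (cases "d * real (Suc j) < \<bar>y\<bar>")
      case True
      hence "real (Suc j) \<le> \<bar>y\<bar> / d" using d by (simp add: field_simps)
      hence "real (Suc j) powr r \<le> (\<bar>y\<bar> / d) powr r" using r_pos by (intro powr_mono2) auto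
      hence "real (Suc j) powr r + (\<bar>y\<bar> / d) powr r \<le> 2 * (\<bar>y\<bar> / d) powr r" by linarith
      hence "ennreal (real (Suc j) powr r + (\<bar>y\<bar> / d) powr r) \<le> ennreal (2 * (\<bar>y\<bar> / d) powr r)"
        by (rule ennreal_leI)
      thus ?thesis using True by (simp del: ennreal_plus)
    qed auto
  qed
  also have "\<dots> = ennreal (real N * (2 * (\<bar>y\<bar> / d) powr r))"
    by (simp add: ennreal_of_nat_eq_real_of_nat ennreal_mult)
  also have "\<dots> \<le> ennreal (2 * (\<bar>y\<bar> / d) powr (r + 1))"
  proof (rule ennreal_leI)
    have "real N = of_int \<lfloor>\<bar>y\<bar> / d\<rfloor>" using d by (simp add: N_def)
    hence N: "real N \<le> \<bar>y\<bar> / d" by simp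
    have "real N * (2 * (\<bar>y\<bar> / d) powr r) \<le> (\<bar>y\<bar> / d) * (2 * (\<bar>y\<bar> / d) powr r)"
      by (intro mult_right_mono N) auto
    also have "\<dots> = 2 * (\<bar>y\<bar> / d) powr (r + 1)"
      using d by (simp add: powr_add)
    finally show "real N * (2 * (\<bar>y\<bar> / d) powr r) \<le> 2 * (\<bar>y\<bar> / d) powr (r + 1)" .
  qed
  finally show ?thesis .
qed

definition aterm :: "real \<Rightarrow> nat \<Rightarrow> 'a \<Rightarrow> ennreal" where
  "aterm d j \<omega> = ennreal (real (Suc j) powr r + (\<bar>Y (Suc j) \<omega>\<bar> / d) powr r) * indicator {\<omega>. d * real (Suc j) < \<bar>Y (Suc j) \<omega>\<bar>} \<omega>"

lemma aterm_meas[measurable]: "aterm d j \<in> borel_measurable M"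
  unfolding aterm_def by measurable

lemma int_aterm_finite:
  assumes d: "d > 0"
  shows "(\<integral>\<^sup>+\<omega>. (\<Sum>j. aterm d j \<omega>) \<partial>M) < \<infinity>"
proof -
  define g where "g j y = ennreal (real (Suc j) powr r + (\<bar>y\<bar> / d) powr r) * indicator {y. d * real (Suc j) < \<bar>y\<bar>} y" for j and y :: real
  have gm[measurable]: "g j \<in> borel_measurable borel" for j unfolding g_def by measurable
  have "(\<integral>\<^sup>+\<omega>. (\<Sum>j. aterm d j \<omega>) \<partial>M) = (\<Sum>j. \<integral>\<^sup>+\<omega>. aterm d j \<omega> \<partial>M)"
    by (rule nn_integral_suminf) measurable
  also have "\<dots> = (\<Sum>j. \<integral>\<^sup>+\<omega>. g j (Y0 \<omega>) \<partial>M)"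
  proof (rule suminf_cong)
    fix j
    have "(\<integral>\<^sup>+\<omega>. aterm d j \<omega> \<partial>M) = (\<integral>\<^sup>+\<omega>. g j (Y (Suc j) \<omega>) \<partial>M)"
      by (rule nn_integral_cong) (simp add: aterm_def g_def indicator_def)
    also have "\<dots> = (\<integral>\<^sup>+\<omega>. g j (Y0 \<omega>) \<partial>M)" by (rule transfer_nn) auto
    finally show "(\<integral>\<^sup>+\<omega>. aterm d j \<omega> \<partial>M) = (\<integral>\<^sup>+\<omega>. g j (Y0 \<omega>) \<partial>M)" .
  qed
  also have "\<dots> = (\<integral>\<^sup>+\<omega>. (\<Sum>j. g j (Y0 \<omega>)) \<partial>M)"
    by (rule nn_integral_suminf[symmetric]) measurable
  also have "\<dots> \<le> (\<integral>\<^sup>+\<omega>. ennreal (2 / d powr (r+1) * \<bar>Y0 \<omega>\<bar> powr (r + 1)) \<partial>M)"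
  proof (rule nn_integral_mono)
    fix \<omega>
    have "(\<Sum>j. g j (Y0 \<omega>)) \<le> ennreal (2 * (\<bar>Y0 \<omega>\<bar> / d) powr (r + 1))"
      unfolding g_def by (rule sum_a_pointwise[OF d])
    also have "2 * (\<bar>Y0 \<omega>\<bar> / d) powr (r + 1) = 2 / d powr (r+1) * \<bar>Y0 \<omega>\<bar> powr (r + 1)"
      using d by (simp add: powr_divide)
    finally show "(\<Sum>j. g j (Y0 \<omega>)) \<le> ennreal (2 / d powr (r+1) * \<bar>Y0 \<omega>\<bar> powr (r + 1))" .
  qed
  also have "\<dots> = ennreal (2 / d powr (r+1)) * (\<integral>\<^sup>+\<omega>. ennreal (\<bar>Y0 \<omega>\<bar> powr (r + 1)) \<partial>M)"
    using d by (subst nn_integral_cmult[symmetric]) (auto intro!: nn_integral_cong simp: ennreal_mult[symmetric])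
  also have "\<dots> < \<infinity>" by (simp add: nn_mom ennreal_mult_less_top)
  finally show ?thesis .
qed

end

context iid_seq begin

definition bterm :: "nat \<Rightarrow> real \<Rightarrow> nat \<Rightarrow> 'a \<Rightarrow> ennreal" where
  "bterm m c k \<omega> = (\<Sum>J\<in>{J. J \<subseteq> {1..k} \<and> card J = m}. \<Prod>j\<in>J. indicator {\<omega>. c < \<bar>Y j \<omega>\<bar>} \<omega>)"

lemma bterm_meas[measurable]: "bterm m c k \<in> borel_measurable M"
proof -
  have "(\<lambda>\<omega>. \<Prod>j\<in>J. indicator {\<omega>. c < \<bar>Y j \<omega>\<bar>} \<omega> :: ennreal) \<in> borel_measurable M"
    if "J \<subseteq> {1..k}" for J
  proof (rule borel_measurable_prod_ennreal)
    fix j assume "j \<in> J"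
    hence "j \<ge> 1" using that by auto
    hence [measurable]: "Y j \<in> borel_measurable M" by (rule Ym)
    show "(\<lambda>\<omega>. indicator {\<omega>. c < \<bar>Y j \<omega>\<bar>} \<omega> :: ennreal) \<in> borel_measurable M"
      by measurable
  qed
  thus ?thesis unfolding bterm_def by (intro borel_measurable_sum) auto
qed

lemma bterm_ge:
  assumes "m \<le> card {j\<in>{1..k}. c < \<bar>Y j \<omega>\<bar>}"
  shows "1 \<le> bterm m c k \<omega>"
proof -
  define T where "T = {j\<in>{1..k}. c < \<bar>Y j \<omega>\<bar>}"
  have fin: "finite {J. J \<subseteq> {1..k} \<and> card J = m}" by (rule finite_subset[of _ "Pow {1..k}"]) auto
  have "bterm m c k \<omega> = (\<Sum>J\<in>{J. J \<subseteq> {1..k} \<and> card J = m}. if J \<subseteq> T then 1 else 0)"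
    unfolding bterm_def
  proof (rule sum.cong)
    fix J assume J: "J \<in> {J. J \<subseteq> {1..k} \<and> card J = m}"
    show "(\<Prod>j\<in>J. indicator {\<omega>. c < \<bar>Y j \<omega>\<bar>} \<omega> :: ennreal) = (if J \<subseteq> T then 1 else 0)"
    proof (cases "J \<subseteq> T")
      case True thus ?thesis by (auto simp: T_def intro!: prod.neutral)
    next
      case False
      then obtain j where "j \<in> J" "j \<notin> T" by auto
      moreover have "finite J" using J by (auto intro: finite_subset)
      ultimately show ?thesis using False J by (auto simp: T_def indicator_def intro!: prod_zero)
    qed
  qed simp
  also have "\<dots> = of_nat (card {J. J \<subseteq> {1..k} \<and> card J = m \<and> J \<subseteq> T})"
    using fin by (simp add: sum.If_cases) (rule arg_cong[where f=card]; auto)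
  also have "{J. J \<subseteq> {1..k} \<and> card J = m \<and> J \<subseteq> T} = {J. J \<subseteq> T \<and> card J = m}"
    by (auto simp: T_def)
  also have "card \<dots> = card T choose m" by (rule n_subsets) (simp add: T_def)
  finally have "bterm m c k \<omega> = of_nat (card T choose m)" .
  moreover have "card T choose m \<ge> 1" using assms zero_less_binomial[of m "card T"] unfolding T_def by linarith
  ultimately show ?thesis by simp
qed

lemma prob_big:
  assumes c: "c > 0" and j: "j \<ge> 1"
  shows "(\<integral>\<^sup>+\<omega>. indicator {\<omega>. c < \<bar>Y j \<omega>\<bar>} \<omega> \<partial>M) \<le> ennreal (K0 / c powr (r+1))"
proof -
  have "(\<integral>\<^sup>+\<omega>. indicator {\<omega>. c < \<bar>Y j \<omega>\<bar>} \<omega> \<partial>M) = (\<integral>\<^sup>+\<omega>. (\<lambda>y. indicator {y. c < \<bar>y\<bar>} y) (Y j \<omega>) \<partial>M)"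
    by (simp add: indicator_def)
  also have "\<dots> = (\<integral>\<^sup>+\<omega>. (\<lambda>y. indicator {y. c < \<bar>y\<bar>} y) (Y0 \<omega>) \<partial>M)"
    by (rule transfer_nn[OF j]) measurable
  also have "\<dots> \<le> (\<integral>\<^sup>+\<omega>. ennreal (1 / c powr (r+1) * \<bar>Y0 \<omega>\<bar> powr (r + 1)) \<partial>M)"
  proof (rule nn_integral_mono)
    fix \<omega>
    show "indicator {y. c < \<bar>y\<bar>} (Y0 \<omega>) \<le> ennreal (1 / c powr (r+1) * \<bar>Y0 \<omega>\<bar> powr (r + 1))"
    proof (cases "c < \<bar>Y0 \<omega>\<bar>")
      case True
      hence "c powr (r+1) \<le> \<bar>Y0 \<omega>\<bar> powr (r+1)" using c r_pos by (intro powr_mono2) auto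
      hence "1 \<le> 1 / c powr (r+1) * \<bar>Y0 \<omega>\<bar> powr (r + 1)" using c by (simp add: field_simps)
      thus ?thesis using True by (simp add: ennreal_leI)
    qed simp
  qed
  also have "\<dots> = ennreal (1 / c powr (r+1)) * (\<integral>\<^sup>+\<omega>. ennreal (\<bar>Y0 \<omega>\<bar> powr (r + 1)) \<partial>M)"
    using c by (subst nn_integral_cmult[symmetric]) (auto intro!: nn_integral_cong simp: ennreal_mult[symmetric])
  also have "\<dots> = ennreal (K0 / c powr (r+1))"
    using c K0_nonneg by (simp add: nn_mom ennreal_mult[symmetric])
  finally show ?thesis .
qed

lemma int_bterm:
  assumes c: "c > 0"
  shows "(\<integral>\<^sup>+\<omega>. bterm m c k \<omega> \<partial>M) \<le> ennreal (real k ^ m * (K0 / c powr (r+1)) ^ m)"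
proof -
  define q where "q = K0 / c powr (r+1)"
  have q0: "q \<ge> 0" using K0_nonneg c by (simp add: q_def)
  have fin: "finite {J. J \<subseteq> {1..k} \<and> card J = m}" by (rule finite_subset[of _ "Pow {1..k}"]) auto
  have "(\<integral>\<^sup>+\<omega>. bterm m c k \<omega> \<partial>M) = (\<Sum>J\<in>{J. J \<subseteq> {1..k} \<and> card J = m}. \<integral>\<^sup>+\<omega>. (\<Prod>j\<in>J. indicator {\<omega>. c < \<bar>Y j \<omega>\<bar>} \<omega>) \<partial>M)"
    unfolding bterm_def
  proof (rule nn_integral_sum)
    fix J assume J: "J \<in> {J. J \<subseteq> {1..k} \<and> card J = m}"
    show "(\<lambda>\<omega>. \<Prod>j\<in>J. indicator {\<omega>. c < \<bar>Y j \<omega>\<bar>} \<omega> :: ennreal) \<in> borel_measurable M"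
    proof (rule borel_measurable_prod_ennreal)
      fix j assume "j \<in> J"
      hence "j \<ge> 1" using J by auto
      hence [measurable]: "Y j \<in> borel_measurable M" by (rule Ym)
      show "(\<lambda>\<omega>. indicator {\<omega>. c < \<bar>Y j \<omega>\<bar>} \<omega> :: ennreal) \<in> borel_measurable M"
        by measurable
    qed
  qed
  also have "\<dots> \<le> (\<Sum>J\<in>{J. J \<subseteq> {1..k} \<and> card J = m}. ennreal (q ^ m))"
  proof (rule sum_mono)
    fix J assume J: "J \<in> {J. J \<subseteq> {1..k} \<and> card J = m}"
    have finJ: "finite J" using J by (auto intro: finite_subset)
    have "(\<integral>\<^sup>+\<omega>. (\<Prod>j\<in>J. indicator {\<omega>. c < \<bar>Y j \<omega>\<bar>} \<omega>) \<partial>M)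
        = (\<Prod>j\<in>J. \<integral>\<^sup>+\<omega>. indicator {\<omega>. c < \<bar>Y j \<omega>\<bar>} \<omega> \<partial>M)"
    proof (rule indep_vars_nn_integral[OF finJ])
      have "indep_vars (\<lambda>_. borel) Y J" using J by (intro indep_vars_subset[OF indepY]) auto
      hence "indep_vars (\<lambda>_. borel) (\<lambda>j \<omega>. (\<lambda>y. indicator {y. c < \<bar>y\<bar>} y :: ennreal) (Y j \<omega>)) J"
        by (rule indep_vars_compose2) measurable
      moreover have "(\<lambda>j \<omega>. (\<lambda>y. indicator {y. c < \<bar>y\<bar>} y :: ennreal) (Y j \<omega>)) = (\<lambda>j \<omega>. indicator {\<omega>. c < \<bar>Y j \<omega>\<bar>} \<omega> :: ennreal)"
        by (auto simp: indicator_def fun_eq_iff)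
      ultimately show "indep_vars (\<lambda>_. borel) (\<lambda>j \<omega>. indicator {\<omega>. c < \<bar>Y j \<omega>\<bar>} \<omega> :: ennreal) J"
        by simp
    qed auto
    also have "\<dots> \<le> (\<Prod>j\<in>J. ennreal q)"
      by (intro prod_mono_ennreal) (use J c in \<open>auto simp: q_def intro!: prob_big\<close>)
    also have "\<dots> = ennreal (q ^ m)" using J q0 by (simp add: prod_ennreal ennreal_power)
    finally show "(\<integral>\<^sup>+\<omega>. (\<Prod>j\<in>J. indicator {\<omega>. c < \<bar>Y j \<omega>\<bar>} \<omega>) \<partial>M) \<le> ennreal (q ^ m)" .
  qed
  also have "\<dots> = ennreal (real (k choose m) * q ^ m)"
    using q0 by (simp add: n_subsets ennreal_mult ennreal_of_nat_eq_real_of_nat)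
  also have "\<dots> \<le> ennreal (real k ^ m * q ^ m)"
  proof (intro ennreal_leI mult_right_mono)
    have f1: "1 \<le> (fact m :: nat)" by (rule fact_ge_1)
    have "(k choose m) * 1 \<le> (k choose m) * fact m" using f1 by (rule mult_le_mono2)
    hence "k choose m \<le> k ^ m" using binomial_fact_pow[of k m] by linarith
    thus "real (k choose m) \<le> real k ^ m" by (metis of_nat_le_iff of_nat_power)
  qed (use q0 in auto)
  finally show ?thesis by (simp add: q_def)
qed

end

definition trunc :: "real \<Rightarrow> real \<Rightarrow> real" where
  "trunc c y = (if \<bar>y\<bar> \<le> c then y else 0)"

lemma trunc_meas[measurable]: "trunc c \<in> borel_measurable borel"
  unfolding trunc_def by measurable

lemma trunc_abs_le: "\<bar>trunc c y\<bar> \<le> \<bar>y\<bar>" unfolding trunc_def by auto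

lemma trunc_abs_le_c: "c \<ge> 0 \<Longrightarrow> \<bar>trunc c y\<bar> \<le> c" unfolding trunc_def by auto

context iid_seq begin

definition KK where "KK = 1 + K0"

lemma KK_ge1: "KK \<ge> 1" using K0_nonneg by (simp add: KK_def)

lemma abs_le_mom: "\<bar>y\<bar> \<le> 1 + \<bar>y\<bar> powr (r+1)"
proof (cases "\<bar>y\<bar> \<le> 1")
  case True thus ?thesis by (smt (verit) powr_ge_zero)
next
  case False
  hence "\<bar>y\<bar> powr 1 \<le> \<bar>y\<bar> powr (r+1)" using r_pos by (intro powr_mono) auto
  thus ?thesis using False by simp
qed

lemma int_Y0: "integrable M Y0"
proof (rule Bochner_Integration.integrable_bound)
  show "integrable M (\<lambda>\<omega>. 1 + \<bar>Y0 \<omega>\<bar> powr (r+1))" using mom by auto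
  show "AE x in M. norm (Y0 x) \<le> norm (1 + \<bar>Y0 x\<bar> powr (r + 1))"
    using abs_le_mom by (auto intro!: AE_I2 order_trans[OF _ abs_ge_self])
qed simp

lemma int_abs_Y0: "(\<integral>\<omega>. \<bar>Y0 \<omega>\<bar> \<partial>M) \<le> KK"
proof -
  have "(\<integral>\<omega>. \<bar>Y0 \<omega>\<bar> \<partial>M) \<le> (\<integral>\<omega>. 1 + \<bar>Y0 \<omega>\<bar> powr (r+1) \<partial>M)"
    by (intro integral_mono int_Y0 integrable_abs) (use mom abs_le_mom in auto)
  also have "\<dots> = KK" using mom by (simp add: KK_def K0_def prob_space)
  finally show ?thesis .
qed

definition mu where "mu c = (\<integral>\<omega>. trunc c (Y0 \<omega>) \<partial>M)"

lemma int_trunc: "integrable M (\<lambda>\<omega>. trunc c (Y0 \<omega>))"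
  by (rule Bochner_Integration.integrable_bound[OF integrable_abs[OF int_Y0]])
     (auto simp: trunc_abs_le)

lemma mu_abs: "\<bar>mu c\<bar> \<le> KK"
proof -
  have "\<bar>mu c\<bar> \<le> (\<integral>\<omega>. \<bar>trunc c (Y0 \<omega>)\<bar> \<partial>M)" unfolding mu_def by (rule integral_abs_bound)
  also have "\<dots> \<le> (\<integral>\<omega>. \<bar>Y0 \<omega>\<bar> \<partial>M)"
    by (intro integral_mono int_trunc integrable_abs int_Y0) (auto simp: trunc_abs_le)
  also have "\<dots> \<le> KK" by (rule int_abs_Y0)
  finally show ?thesis .
qed

lemma mu_abs_c: "c \<ge> 0 \<Longrightarrow> \<bar>mu c\<bar> \<le> c"
proof -
  assume c: "c \<ge> 0"
  have "\<bar>mu c\<bar> \<le> (\<integral>\<omega>. \<bar>trunc c (Y0 \<omega>)\<bar> \<partial>M)" unfolding mu_def by (rule integral_abs_bound)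
  also have "\<dots> \<le> (\<integral>\<omega>. c \<partial>M)"
    by (intro integral_mono int_trunc integrable_abs) (auto simp: trunc_abs_le_c c)
  also have "\<dots> = c" by (simp add: prob_space)
  finally show ?thesis .
qed

definition Zt :: "real \<Rightarrow> nat \<Rightarrow> 'a \<Rightarrow> real" where
  "Zt c j \<omega> = trunc c (Y j \<omega>) - mu c"

lemma Zt_indep: "indep_vars (\<lambda>_. borel) (Zt c) {1..k}"
proof -
  have "indep_vars (\<lambda>_. borel) Y {1..k}" by (rule indep_vars_subset[OF indepY]) auto
  hence "indep_vars (\<lambda>_. borel) (\<lambda>j \<omega>. (\<lambda>y. trunc c y - mu c) (Y j \<omega>)) {1..k}"
    by (rule indep_vars_compose2) measurable
  thus ?thesis by (simp add: Zt_def[abs_def])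
qed

lemma Zt_mean: "j \<ge> 1 \<Longrightarrow> expectation (Zt c j) = 0"
proof -
  assume j: "j \<ge> 1"
  have "expectation (Zt c j) = (\<integral>\<omega>. (\<lambda>y. trunc c y - mu c) (Y j \<omega>) \<partial>M)" by (simp add: Zt_def[abs_def])
  also have "\<dots> = (\<integral>\<omega>. (\<lambda>y. trunc c y - mu c) (Y0 \<omega>) \<partial>M)" by (rule transfer_int[OF j]) measurable
  also have "\<dots> = 0" using int_trunc by (simp add: mu_def prob_space)
  finally show ?thesis .
qed

lemma Zt_var: assumes j: "j \<ge> 1" and c: "c \<ge> 1"
  shows "expectation (\<lambda>\<omega>. (Zt c j \<omega>)\<^sup>2) \<le> 4 * c * KK\<^sup>2"
proof -
  have "expectation (\<lambda>\<omega>. (Zt c j \<omega>)\<^sup>2) = (\<integral>\<omega>. (\<lambda>y. (trunc c y - mu c)\<^sup>2) (Y j \<omega>) \<partial>M)" by (simp add: Zt_def)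
  also have "\<dots> = (\<integral>\<omega>. (\<lambda>y. (trunc c y - mu c)\<^sup>2) (Y0 \<omega>) \<partial>M)" by (rule transfer_int[OF j]) measurable
  also have "\<dots> \<le> (\<integral>\<omega>. 2 * c * (1 + \<bar>Y0 \<omega>\<bar> powr (r+1)) + 2 * KK\<^sup>2 \<partial>M)"
  proof (rule integral_mono)
    show "integrable M (\<lambda>\<omega>. (trunc c (Y0 \<omega>) - mu c)\<^sup>2)"
    proof (rule integrable_const_bound[where B="(2*c)\<^sup>2"])
      show "AE x in M. norm ((trunc c (Y0 x) - mu c)\<^sup>2) \<le> (2 * c)\<^sup>2"
      proof (rule AE_I2)
        fix x
        have "\<bar>trunc c (Y0 x) - mu c\<bar> \<le> 2 * c"
          using trunc_abs_le_c[of c "Y0 x"] mu_abs_c[of c] c by linarith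
        thus "norm ((trunc c (Y0 x) - mu c)\<^sup>2) \<le> (2 * c)\<^sup>2"
          unfolding real_norm_def power_abs by (rule power_mono) auto
      qed
    qed measurable
    show "integrable M (\<lambda>\<omega>. 2 * c * (1 + \<bar>Y0 \<omega>\<bar> powr (r+1)) + 2 * KK\<^sup>2)" using mom by auto
    fix \<omega> assume "\<omega> \<in> space M"
    define x where "x = trunc c (Y0 \<omega>)"
    have "(x - mu c)\<^sup>2 \<le> 2 * x\<^sup>2 + 2 * (mu c)\<^sup>2"
      by (smt (verit) power2_diff zero_le_power2 power2_sum)
    moreover have "x\<^sup>2 \<le> c * (1 + \<bar>Y0 \<omega>\<bar> powr (r+1))"
    proof -
      have "x\<^sup>2 = \<bar>x\<bar> * \<bar>x\<bar>" by (simp add: power2_eq_square abs_mult_self_eq)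
      also have "\<dots> \<le> c * \<bar>Y0 \<omega>\<bar>"
        using trunc_abs_le_c[of c "Y0 \<omega>"] trunc_abs_le[of c "Y0 \<omega>"] c
        by (intro mult_mono) (auto simp: x_def)
      also have "\<dots> \<le> c * (1 + \<bar>Y0 \<omega>\<bar> powr (r+1))" using c abs_le_mom by (intro mult_left_mono) auto
      finally show ?thesis .
    qed
    moreover have "(mu c)\<^sup>2 \<le> KK\<^sup>2" using mu_abs[of c] KK_ge1 abs_le_square_iff[of "mu c" KK] by simp
    ultimately show "(trunc c (Y0 \<omega>) - mu c)\<^sup>2 \<le> 2 * c * (1 + \<bar>Y0 \<omega>\<bar> powr (r+1)) + 2 * KK\<^sup>2"
      unfolding x_def by linarith
  qed
  also have "\<dots> = 2 * c * KK + 2 * KK\<^sup>2" using mom by (simp add: KK_def K0_def prob_space)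
  also have "\<dots> \<le> 4 * c * KK\<^sup>2"
  proof -
    have "KK \<le> KK\<^sup>2" using KK_ge1 by (simp add: power2_eq_square)
    hence "2 * c * KK \<le> 2 * c * KK\<^sup>2" using c by (intro mult_left_mono) auto
    moreover have "(2::real) * KK\<^sup>2 \<le> (2 * c) * KK\<^sup>2" using c by (intro mult_right_mono) auto
    ultimately show ?thesis by linarith
  qed
  finally show ?thesis .
qed

lemma Zt_bound: "c \<ge> 0 \<Longrightarrow> \<bar>Zt c j \<omega>\<bar> \<le> 2 * c"
  unfolding Zt_def using trunc_abs_le_c[of c "Y j \<omega>"] mu_abs_c[of c] by linarith

definition cterm :: "real \<Rightarrow> real \<Rightarrow> nat \<Rightarrow> 'a \<Rightarrow> ennreal" where
  "cterm e c k \<omega> = indicator {\<omega>\<in>space M. e \<le> \<bar>\<Sum>j\<in>{1..k}. Zt c j \<omega>\<bar>} \<omega>"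

lemma Zt_meas[measurable]: "j \<ge> 1 \<Longrightarrow> Zt c j \<in> borel_measurable M"
  using Zt_indep[of c j] unfolding indep_vars_def by auto

lemma sumZ_meas[measurable]: "(\<lambda>\<omega>. \<Sum>j\<in>{1..k}. Zt c j \<omega>) \<in> borel_measurable M"
  by (rule borel_measurable_sum) (auto intro: Zt_meas)

lemma sumZn_meas[measurable]: "(\<lambda>\<omega>. \<Sum>j\<in>{1..k}. - Zt c j \<omega>) \<in> borel_measurable M"
  by (rule borel_measurable_sum) (auto intro: Zt_meas)

lemma cterm_set_meas: "{\<omega>\<in>space M. e \<le> \<bar>\<Sum>j\<in>{1..k}. Zt c j \<omega>\<bar>} \<in> sets M"
proof -
  have "(\<lambda>\<omega>. \<Sum>j\<in>{1..k}. Zt c j \<omega>) \<in> borel_measurable M"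
    by (rule borel_measurable_sum) (auto intro: Zt_meas)
  thus ?thesis by measurable
qed

lemma cterm_meas[measurable]: "cterm e c k \<in> borel_measurable M"
  unfolding cterm_def using cterm_set_meas by measurable

lemma int_cterm:
  assumes c: "c \<ge> 1" and a: "0 < a" "a \<le> 1/2"
  shows "(\<integral>\<^sup>+\<omega>. cterm e c k \<omega> \<partial>M) \<le> ennreal (2 * exp (- (a / c) * e + real k * ((a / c)\<^sup>2 * (4 * c * KK\<^sup>2))))"
proof -
  define l where "l = a / c"
  define v where "v = 4 * c * KK\<^sup>2"
  define B where "B = exp (- l * e + real (card {1..k}) * (l\<^sup>2 * v))"
  have l: "l > 0" "l * (2 * c) \<le> 1" using c a by (auto simp: l_def)
  have P1: "prob {\<omega>\<in>space M. e \<le> (\<Sum>j\<in>{1..k}. Zt c j \<omega>)} \<le> B"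
    unfolding B_def
    by (rule bernstein_tail[OF _ Zt_indep _ _ _ l]) (use c in \<open>auto intro: Zt_bound Zt_mean Zt_var simp: v_def\<close>)
  have ind2: "indep_vars (\<lambda>_. borel) (\<lambda>j \<omega>. - Zt c j \<omega>) {1..k}"
    using Zt_indep[of c k] by (rule indep_vars_compose2[where Y="\<lambda>_ x. - x", simplified]) measurable
  have P2: "prob {\<omega>\<in>space M. e \<le> (\<Sum>j\<in>{1..k}. - Zt c j \<omega>)} \<le> B"
    unfolding B_def
  proof (rule bernstein_tail[OF _ ind2 _ _ _ l])
    fix j assume "j \<in> {1..k}"
    hence j: "j \<ge> 1" by auto
    have "expectation (\<lambda>\<omega>. - Zt c j \<omega>) = - expectation (Zt c j)" by simp
    thus "expectation (\<lambda>\<omega>. - Zt c j \<omega>) = 0" using Zt_mean[OF j] by simp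
    show "expectation (\<lambda>\<omega>. (- Zt c j \<omega>)\<^sup>2) \<le> v" using Zt_var[OF j c] by (simp add: v_def)
  qed (use c in \<open>auto intro: Zt_bound\<close>)
  have "{\<omega>\<in>space M. e \<le> \<bar>\<Sum>j\<in>{1..k}. Zt c j \<omega>\<bar>} \<subseteq>
        {\<omega>\<in>space M. e \<le> (\<Sum>j\<in>{1..k}. Zt c j \<omega>)} \<union> {\<omega>\<in>space M. e \<le> (\<Sum>j\<in>{1..k}. - Zt c j \<omega>)}"
    by (auto simp: sum_negf abs_if split: if_splits)
  hence "prob {\<omega>\<in>space M. e \<le> \<bar>\<Sum>j\<in>{1..k}. Zt c j \<omega>\<bar>} \<le>
         prob ({\<omega>\<in>space M. e \<le> (\<Sum>j\<in>{1..k}. Zt c j \<omega>)} \<union> {\<omega>\<in>space M. e \<le> (\<Sum>j\<in>{1..k}. - Zt c j \<omega>)})"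
    by (rule finite_measure_mono) measurable
  also have "\<dots> \<le> prob {\<omega>\<in>space M. e \<le> (\<Sum>j\<in>{1..k}. Zt c j \<omega>)} + prob {\<omega>\<in>space M. e \<le> (\<Sum>j\<in>{1..k}. - Zt c j \<omega>)}"
    by (rule measure_Un_le) measurable
  also have "\<dots> \<le> 2 * B" using P1 P2 by linarith
  finally have P: "prob {\<omega>\<in>space M. e \<le> \<bar>\<Sum>j\<in>{1..k}. Zt c j \<omega>\<bar>} \<le> 2 * B" .
  have "(\<integral>\<^sup>+\<omega>. cterm e c k \<omega> \<partial>M) = emeasure M {\<omega>\<in>space M. e \<le> \<bar>\<Sum>j\<in>{1..k}. Zt c j \<omega>\<bar>}"
    unfolding cterm_def using cterm_set_meas by simp
  also have "\<dots> = ennreal (prob {\<omega>\<in>space M. e \<le> \<bar>\<Sum>j\<in>{1..k}. Zt c j \<omega>\<bar>})"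
    by (simp add: emeasure_eq_measure)
  also have "\<dots> \<le> ennreal (2 * B)" using P by (rule ennreal_leI)
  finally show ?thesis by (simp add: B_def l_def v_def)
qed

end

lemma exp_neg_le_poly:
  fixes y :: real assumes y: "y > 0" and N: "N \<ge> 1"
  shows "exp (- y) \<le> (real N / y) ^ N"
proof -
  have "exp y = exp (y / real N) ^ N"
    using N by (simp add: exp_of_nat_mult[symmetric])
  moreover have "(y / real N) ^ N \<le> exp (y / real N) ^ N"
  proof (rule power_mono)
    show "y / real N \<le> exp (y / real N)" using exp_ge_add_one_self[of "y / real N"] by linarith
  qed (use y in simp)
  ultimately have le: "(y / real N) ^ N \<le> exp y" by simp
  have pos: "0 < (y / real N) ^ N" using y N by simp
  have "exp (- y) = inverse (exp y)" by (simp add: exp_minus)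
  also have "\<dots> \<le> inverse ((y / real N) ^ N)" using le pos by (rule le_imp_inverse_le)
  also have "\<dots> = (real N / y) ^ N" by (simp add: power_inverse[symmetric])
  finally show ?thesis .
qed

lemma summable_exp_powr:
  fixes b g r :: real assumes b: "b > 0" and g: "g > 0"
  shows "summable (\<lambda>k. real k powr r * (2 * exp (- b * real k powr g)))"
proof -
  define N where "N = nat \<lceil>(r + 2) / g\<rceil> + 1"
  have N1: "N \<ge> 1" by (simp add: N_def)
  have gN: "g * real N \<ge> r + 2"
  proof -
    have "(r + 2) / g \<le> real N" unfolding N_def by linarith
    thus ?thesis using g by (simp add: field_simps)
  qed
  define C where "C = 2 * (real N / b) ^ N"
  show ?thesis
  proof (rule summable_comparison_test)
    show "summable (\<lambda>k. C * real k powr (-2))"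
      by (intro summable_mult) (simp add: summable_real_powr_iff)
    show "\<exists>N0. \<forall>n\<ge>N0. norm (real n powr r * (2 * exp (- b * real n powr g))) \<le> C * real n powr (-2)"
    proof (intro exI allI impI)
      fix n :: nat assume n: "n \<ge> 1"
      have npos: "real n > 0" using n by simp
      have y: "b * real n powr g > 0" using b npos by simp
      have "exp (- b * real n powr g) \<le> (real N / (b * real n powr g)) ^ N"
        using exp_neg_le_poly[OF y N1] by simp
      also have "\<dots> = (real N / b) ^ N / real n powr (g * real N)"
        using npos b by (simp add: power_divide power_mult_distrib powr_realpow[symmetric] powr_powr field_simps)
      finally have e: "exp (- b * real n powr g) \<le> (real N / b) ^ N / real n powr (g * real N)" .
      have "norm (real n powr r * (2 * exp (- b * real n powr g))) = real n powr r * (2 * exp (- b * real n powr g))"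
        by simp
      also have "\<dots> \<le> real n powr r * (2 * ((real N / b) ^ N / real n powr (g * real N)))"
        using e by (intro mult_left_mono) auto
      also have "\<dots> = C * real n powr (r - g * real N)"
        using npos by (simp add: C_def powr_diff field_simps)
      also have "\<dots> \<le> C * real n powr (-2)"
        using n gN b by (intro mult_left_mono powr_mono) (auto simp: C_def)
      finally show "norm (real n powr r * (2 * exp (- b * real n powr g))) \<le> C * real n powr (-2)" .
    qed
  qed
qed


context iid_seq begin

lemma mu_small:
  assumes c: "c > 0" shows "\<bar>mu c\<bar> \<le> K0 / c powr r"
proof -
  have pt: "\<bar>y - trunc c y\<bar> \<le> \<bar>y\<bar> powr (r+1) / c powr r" for y
  proof (cases "\<bar>y\<bar> \<le> c")
    case True thus ?thesis by (simp add: trunc_def)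
  next
    case False
    hence yp: "\<bar>y\<bar> > 0" using c by simp
    have "c powr r \<le> \<bar>y\<bar> powr r" using False c r_pos by (intro powr_mono2) auto
    hence "\<bar>y\<bar> * c powr r \<le> \<bar>y\<bar> * \<bar>y\<bar> powr r" using yp by (intro mult_left_mono) auto
    also have "\<dots> = \<bar>y\<bar> powr (r+1)" using yp by (simp add: powr_add)
    finally have "\<bar>y\<bar> \<le> \<bar>y\<bar> powr (r+1) / c powr r" using c by (simp add: field_simps)
    thus ?thesis using False by (simp add: trunc_def)
  qed
  have "mu c = (\<integral>\<omega>. Y0 \<omega> \<partial>M) - (\<integral>\<omega>. Y0 \<omega> - trunc c (Y0 \<omega>) \<partial>M)"
    unfolding mu_def using int_Y0 int_trunc by simp
  also have "(\<integral>\<omega>. Y0 \<omega> \<partial>M) = 0" using mean0 by simp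
  finally have "\<bar>mu c\<bar> = \<bar>\<integral>\<omega>. Y0 \<omega> - trunc c (Y0 \<omega>) \<partial>M\<bar>" by simp
  also have "\<dots> \<le> (\<integral>\<omega>. \<bar>Y0 \<omega> - trunc c (Y0 \<omega>)\<bar> \<partial>M)" by (rule integral_abs_bound)
  also have "\<dots> \<le> (\<integral>\<omega>. \<bar>Y0 \<omega>\<bar> powr (r+1) / c powr r \<partial>M)"
    by (intro integral_mono integrable_abs Bochner_Integration.integrable_diff int_Y0 int_trunc integrable_divide mom pt)
  also have "\<dots> = K0 / c powr r" by (simp add: K0_def)
  finally show ?thesis .
qed

theorem core:
  assumes eps: "\<epsilon> > 0"
  shows "\<exists>R. R \<in> borel_measurable M \<and> integral\<^sup>N M R < \<infinity> \<and>
           (\<forall>\<omega>\<in>space M. \<forall>k\<ge>1. \<epsilon> * real k < \<bar>\<Sum>s\<in>{1..k}. Y s \<omega>\<bar> \<longrightarrow> ennreal (real k powr r) \<le> R \<omega>)"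
proof -
  define \<alpha> where "\<alpha> = (r + 2) / (2 * (r + 1))"
  define \<gamma> where "\<gamma> = r / (2 * (r + 1))"
  have \<alpha>\<gamma>: "1 - \<alpha> = \<gamma>" using r_pos by (simp add: \<alpha>_def \<gamma>_def field_simps)
  have \<gamma>pos: "\<gamma> > 0" using r_pos by (simp add: \<gamma>_def)
  have \<alpha>pos: "\<alpha> > 0" using r_pos by (simp add: \<alpha>_def)
  define m :: nat where "m = nat \<lceil>2 * (r + 2) / r\<rceil> + 1"
  have m1: "m \<ge> 1" by (simp add: m_def)
  have mr: "r * real m / 2 > r + 2"
  proof -
    have "2 * (r + 2) / r < real m" unfolding m_def by linarith
    thus ?thesis using r_pos by (simp add: field_simps)
  qed
  define \<delta> where "\<delta> = \<epsilon> / (4 * real m)"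
  have \<delta>pos: "\<delta> > 0" using eps m1 by (simp add: \<delta>_def)
  define c :: "nat \<Rightarrow> real" where "c k = real k powr \<alpha>" for k
  define a where "a = min (1/2) (\<epsilon> / (32 * KK\<^sup>2))"
  have apos: "a > 0" "a \<le> 1/2" using eps KK_ge1 by (auto simp: a_def)
  have aK: "4 * a * KK\<^sup>2 \<le> \<epsilon> / 8"
  proof -
    have "a \<le> \<epsilon> / (32 * KK\<^sup>2)" by (simp add: a_def)
    thus ?thesis using KK_ge1 by (simp add: field_simps)
  qed
  obtain n0 :: nat where n0: "\<And>k. k \<ge> n0 \<Longrightarrow> \<bar>mu (c k)\<bar> \<le> \<epsilon> / 4"
  proof -
    have lim: "(\<lambda>k. K0 * real k powr (- (\<alpha> * r))) \<longlonglongrightarrow> K0 * 0"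
      by (intro tendsto_mult tendsto_const tendsto_neg_powr filterlim_real_sequentially)
         (use \<alpha>pos r_pos in simp)
    have "eventually (\<lambda>k. K0 * real k powr (- (\<alpha> * r)) < \<epsilon> / 4) sequentially"
      using order_tendstoD(2)[OF lim, of "\<epsilon> / 4"] eps by simp
    moreover have "eventually (\<lambda>k. k \<ge> 1) sequentially" by (rule eventually_ge_at_top)
    ultimately have "eventually (\<lambda>k. \<bar>mu (c k)\<bar> \<le> \<epsilon> / 4) sequentially"
    proof eventually_elim
      case (elim k)
      have kpos: "real k > 0" using elim by simp
      have "\<bar>mu (c k)\<bar> \<le> K0 / c k powr r" using kpos by (intro mu_small) (simp add: c_def)
      also have "K0 / c k powr r = K0 * real k powr (- (\<alpha> * r))"
        using kpos by (simp add: c_def powr_powr powr_minus divide_inverse)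
      finally show ?case using elim by simp
    qed
    thus ?thesis using that by (auto simp: eventually_sequentially)
  qed
  define R where "R \<omega> = ennreal (real n0 powr r) + (\<Sum>j. aterm \<delta> j \<omega>) +
      (\<Sum>k. ennreal (real k powr r) * (bterm m (c k) k \<omega> + cterm (\<epsilon> * real k / 4) (c k) k \<omega>))" for \<omega>
  show ?thesis
  proof (intro exI conjI ballI allI impI)
    show Rm: "R \<in> borel_measurable M" unfolding R_def by measurable
    define fB where "fB k = real k powr r * (real k ^ m * (K0 / c k powr (r+1)) ^ m)" for k
    define b where "b = a * \<epsilon> / 8"
    have bpos: "b > 0" using apos eps by (simp add: b_def)
    define fC where "fC k = real k powr r * (2 * exp (- b * real k powr \<gamma>))" for k
    have fB_nn: "fB k \<ge> 0" for k using K0_nonneg by (simp add: fB_def c_def)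
    have fC_nn: "fC k \<ge> 0" for k by (simp add: fC_def)
    have sumC: "summable fC" unfolding fC_def by (rule summable_exp_powr[OF bpos \<gamma>pos])
    have sumB: "summable fB"
    proof (rule summable_comparison_test)
      show "summable (\<lambda>k. K0 ^ m * real k powr (r - r * real m / 2))"
        using mr by (intro summable_mult) (simp add: summable_real_powr_iff)
      show "\<exists>N0. \<forall>n\<ge>N0. norm (fB n) \<le> K0 ^ m * real n powr (r - r * real m / 2)"
      proof (intro exI allI impI)
        fix n :: nat assume n: "n \<ge> 1"
        have npos: "real n > 0" using n by simp
        have ex: "\<alpha> * (r+1) * real m = real m * ((r+2)/2)" using r_pos by (simp add: \<alpha>_def field_simps)
        have pos: "0 < real n powr (\<alpha> * (r+1))" using npos by simp
        have "(c n powr (r+1)) ^ m = (real n powr (\<alpha> * (r+1))) ^ m" by (simp add: c_def powr_powr)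
        also have "\<dots> = (real n powr (\<alpha> * (r+1))) powr real m" using powr_realpow[OF pos] by simp
        also have "\<dots> = real n powr (real m * ((r + 2) / 2))"
          by (simp add: powr_powr ex)
        finally have "(c n powr (r+1)) ^ m = real n powr (real m * ((r + 2) / 2))" .
        hence "fB n = K0 ^ m * (real n powr r * real n powr real m / real n powr (real m * ((r + 2) / 2)))"
          using npos by (simp add: fB_def power_divide powr_realpow field_simps)
        also have "real n powr r * real n powr real m / real n powr (real m * ((r + 2) / 2)) = real n powr (r - r * real m / 2)"
          using npos by (simp add: powr_add[symmetric] powr_diff[symmetric] field_simps)
        finally show "norm (fB n) \<le> K0 ^ m * real n powr (r - r * real m / 2)" using fB_nn[of n] by simp
      qed
    qed
    have intB: "(\<integral>\<^sup>+\<omega>. bterm m (c k) k \<omega> \<partial>M) \<le> ennreal (real k ^ m * (K0 / c k powr (r+1)) ^ m)" if "k \<ge> 1" for k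
      using that \<alpha>pos by (intro int_bterm) (simp add: c_def)
    have intC: "(\<integral>\<^sup>+\<omega>. cterm (\<epsilon> * real k / 4) (c k) k \<omega> \<partial>M) \<le> ennreal (2 * exp (- b * real k powr \<gamma>))" if k: "k \<ge> 1" for k
    proof -
      have kpos: "real k > 0" using k by simp
      have ck: "c k \<ge> 1" using k \<alpha>pos by (simp add: c_def ge_one_powr_ge_zero)
      have kc: "real k / c k = real k powr \<gamma>"
        using kpos by (simp add: c_def \<alpha>\<gamma>[symmetric] powr_diff)
      have "- (a / c k) * (\<epsilon> * real k / 4) + real k * ((a / c k)\<^sup>2 * (4 * c k * KK\<^sup>2))
          = (real k / c k) * a * (- \<epsilon> / 4 + 4 * a * KK\<^sup>2)"
        using ck by (simp add: power2_eq_square field_simps)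
      also have "\<dots> \<le> (real k / c k) * a * (- \<epsilon> / 8)"
        using aK apos ck kpos by (intro mult_left_mono) auto
      also have "\<dots> = - b * real k powr \<gamma>" by (simp add: kc b_def)
      finally have ex: "- (a / c k) * (\<epsilon> * real k / 4) + real k * ((a / c k)\<^sup>2 * (4 * c k * KK\<^sup>2)) \<le> - b * real k powr \<gamma>" .
      have "(\<integral>\<^sup>+\<omega>. cterm (\<epsilon> * real k / 4) (c k) k \<omega> \<partial>M)
          \<le> ennreal (2 * exp (- (a / c k) * (\<epsilon> * real k / 4) + real k * ((a / c k)\<^sup>2 * (4 * c k * KK\<^sup>2))))"
        by (rule int_cterm[OF ck apos])
      also have "\<dots> \<le> ennreal (2 * exp (- b * real k powr \<gamma>))"
        using ex by (intro ennreal_leI) simp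
      finally show ?thesis .
    qed
    have termk: "ennreal (real k powr r) * ((\<integral>\<^sup>+\<omega>. bterm m (c k) k \<omega> \<partial>M) + (\<integral>\<^sup>+\<omega>. cterm (\<epsilon> * real k / 4) (c k) k \<omega> \<partial>M))
        \<le> ennreal (fB k + fC k)" for k
    proof (cases "k = 0")
      case True thus ?thesis using r_pos by simp
    next
      case False
      hence k: "k \<ge> 1" by simp
      have "ennreal (real k powr r) * ((\<integral>\<^sup>+\<omega>. bterm m (c k) k \<omega> \<partial>M) + (\<integral>\<^sup>+\<omega>. cterm (\<epsilon> * real k / 4) (c k) k \<omega> \<partial>M))
          \<le> ennreal (real k powr r) * (ennreal (real k ^ m * (K0 / c k powr (r+1)) ^ m) + ennreal (2 * exp (- b * real k powr \<gamma>)))"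
        by (intro mult_left_mono add_mono intB intC k) auto
      also have "\<dots> = ennreal (fB k + fC k)"
        using K0_nonneg by (simp add: fB_def fC_def ennreal_mult[symmetric] ennreal_plus[symmetric] distrib_left c_def del: ennreal_plus)
      finally show ?thesis .
    qed
    have "integral\<^sup>N M R = ennreal (real n0 powr r) + (\<integral>\<^sup>+\<omega>. (\<Sum>j. aterm \<delta> j \<omega>) \<partial>M) +
         (\<integral>\<^sup>+\<omega>. (\<Sum>k. ennreal (real k powr r) * (bterm m (c k) k \<omega> + cterm (\<epsilon> * real k / 4) (c k) k \<omega>)) \<partial>M)"
    proof -
      have "integral\<^sup>N M R = (\<integral>\<^sup>+\<omega>. ennreal (real n0 powr r) + (\<Sum>j. aterm \<delta> j \<omega>) \<partial>M) +
         (\<integral>\<^sup>+\<omega>. (\<Sum>k. ennreal (real k powr r) * (bterm m (c k) k \<omega> + cterm (\<epsilon> * real k / 4) (c k) k \<omega>)) \<partial>M)"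
        unfolding R_def by (rule nn_integral_add) measurable
      also have "(\<integral>\<^sup>+\<omega>. ennreal (real n0 powr r) + (\<Sum>j. aterm \<delta> j \<omega>) \<partial>M)
          = (\<integral>\<^sup>+\<omega>. ennreal (real n0 powr r) \<partial>M) + (\<integral>\<^sup>+\<omega>. (\<Sum>j. aterm \<delta> j \<omega>) \<partial>M)"
        by (rule nn_integral_add) measurable
      also have "(\<integral>\<^sup>+\<omega>. ennreal (real n0 powr r) \<partial>M) = ennreal (real n0 powr r)"
        by (simp add: emeasure_space_1)
      finally show ?thesis .
    qed
    also have "(\<integral>\<^sup>+\<omega>. (\<Sum>k. ennreal (real k powr r) * (bterm m (c k) k \<omega> + cterm (\<epsilon> * real k / 4) (c k) k \<omega>)) \<partial>M)
        = (\<Sum>k. ennreal (real k powr r) * ((\<integral>\<^sup>+\<omega>. bterm m (c k) k \<omega> \<partial>M) + (\<integral>\<^sup>+\<omega>. cterm (\<epsilon> * real k / 4) (c k) k \<omega> \<partial>M)))"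
      by (subst nn_integral_suminf) (measurable, simp add: nn_integral_cmult nn_integral_add)
    also have "\<dots> \<le> (\<Sum>k. ennreal (fB k + fC k))"
      by (intro suminf_le termk) auto
    also have "\<dots> = ennreal (\<Sum>k. fB k + fC k)"
      using fB_nn fC_nn sumB sumC by (intro suminf_ennreal2) (auto intro: add_nonneg_nonneg summable_add)
    finally show "integral\<^sup>N M R < \<infinity>"
      using int_aterm_finite[OF \<delta>pos] by (simp add: ennreal_add_less_top order.strict_trans1)
    fix \<omega> k assume \<omega>: "\<omega> \<in> space M" and k: "k \<ge> 1" and big: "\<epsilon> * real k < \<bar>\<Sum>s\<in>{1..k}. Y s \<omega>\<bar>"
    define A where "A = ennreal (real n0 powr r)"
    define Asum where "Asum = (\<Sum>j. aterm \<delta> j \<omega>)"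
    define F where "F k' = ennreal (real k' powr r) * (bterm m (c k') k' \<omega> + cterm (\<epsilon> * real k' / 4) (c k') k' \<omega>)" for k'
    have Rw: "R \<omega> = A + Asum + suminf F" unfolding R_def A_def Asum_def F_def[abs_def] ..
    have term_le: "f i \<le> suminf f" for f :: "nat \<Rightarrow> ennreal" and i
      using sum_le_suminf[of f "{i}"] by auto
    show "ennreal (real k powr r) \<le> R \<omega>"
    proof (cases "k < n0")
      case True
      have "ennreal (real k powr r) \<le> A" unfolding A_def using True r_pos
        by (intro ennreal_leI powr_mono2) auto
      also have "A \<le> R \<omega>" unfolding Rw by (simp add: add.assoc)
      finally show ?thesis .
    next
      case False
      hence kn0: "k \<ge> n0" by simp
      have kpos: "real k > 0" using k by simp
      have ck: "c k \<ge> 1" using k \<alpha>pos by (simp add: c_def ge_one_powr_ge_zero)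
      define T where "T = {j\<in>{1..k}. c k < \<bar>Y j \<omega>\<bar>}"
      have viaF: "ennreal (real k powr r) \<le> R \<omega>"
        if "1 \<le> bterm m (c k) k \<omega> + cterm (\<epsilon> * real k / 4) (c k) k \<omega>"
      proof -
        have "ennreal (real k powr r) = ennreal (real k powr r) * 1" by simp
        also have "\<dots> \<le> F k" unfolding F_def by (intro mult_left_mono that) auto
        also have "\<dots> \<le> suminf F" by (rule term_le)
        also have "\<dots> \<le> R \<omega>" unfolding Rw by simp
        finally show ?thesis .
      qed
      show ?thesis
      proof (cases "m \<le> card T")
        case True
        hence "1 \<le> bterm m (c k) k \<omega>" unfolding T_def by (rule bterm_ge)
        thus ?thesis by (intro viaF) (simp add: order_trans[OF _ add_increasing2])
      next
        case Tsmall: False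
        show ?thesis
        proof (cases "\<epsilon> * real k / 4 \<le> \<bar>\<Sum>j\<in>{1..k}. Zt (c k) j \<omega>\<bar>")
          case True
          hence "cterm (\<epsilon> * real k / 4) (c k) k \<omega> = 1" using \<omega> by (simp add: cterm_def)
          thus ?thesis by (intro viaF) simp
        next
          case Zsmall: False
          have "\<exists>j\<in>{1..k}. \<delta> * real k < \<bar>Y j \<omega>\<bar>"
          proof (rule ccontr)
            assume "\<not> ?thesis"
            hence small: "\<And>j. j \<in> {1..k} \<Longrightarrow> \<bar>Y j \<omega>\<bar> \<le> \<delta> * real k" by force
            have split: "(\<Sum>s\<in>{1..k}. Y s \<omega>) = (\<Sum>j\<in>{1..k}. Zt (c k) j \<omega>) + real k * mu (c k)
                 + (\<Sum>s\<in>{1..k}. Y s \<omega> - trunc (c k) (Y s \<omega>))"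
              by (simp add: Zt_def sum_subtractf)
            have "(\<Sum>s\<in>{1..k}. Y s \<omega> - trunc (c k) (Y s \<omega>)) = (\<Sum>s\<in>T. Y s \<omega> - trunc (c k) (Y s \<omega>))"
              by (rule sum.mono_neutral_right) (auto simp: T_def trunc_def)
            also have "\<dots> = (\<Sum>s\<in>T. Y s \<omega>)"
              by (rule sum.cong) (auto simp: T_def trunc_def)
            finally have eqT: "(\<Sum>s\<in>{1..k}. Y s \<omega> - trunc (c k) (Y s \<omega>)) = (\<Sum>s\<in>T. Y s \<omega>)" .
            have "\<bar>\<Sum>s\<in>T. Y s \<omega>\<bar> \<le> (\<Sum>s\<in>T. \<bar>Y s \<omega>\<bar>)" by (rule sum_abs)
            also have "\<dots> \<le> (\<Sum>s\<in>T. \<delta> * real k)" by (intro sum_mono small) (auto simp: T_def)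
            also have "\<dots> = real (card T) * (\<delta> * real k)" by simp
            also have "\<dots> \<le> (real m - 1) * (\<delta> * real k)"
              using Tsmall \<delta>pos kpos by (intro mult_right_mono) auto
            also have "\<dots> < \<epsilon> * real k / 4"
              using m1 eps kpos by (simp add: \<delta>_def field_simps)
            finally have bT: "\<bar>\<Sum>s\<in>T. Y s \<omega>\<bar> < \<epsilon> * real k / 4" .
            have bmu: "\<bar>real k * mu (c k)\<bar> \<le> \<epsilon> * real k / 4"
              using n0[OF kn0] kpos by (simp add: abs_mult field_simps)
            have "\<bar>\<Sum>s\<in>{1..k}. Y s \<omega>\<bar> < \<epsilon> * real k"
              unfolding split eqT using bT bmu Zsmall by linarith
            thus False using big by simp
          qed
          then obtain j where j: "j \<in> {1..k}" "\<delta> * real k < \<bar>Y j \<omega>\<bar>" by blast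
          have jS: "Suc (j - 1) = j" using j by simp
          have ind: "\<delta> * real j < \<bar>Y j \<omega>\<bar>"
            using j \<delta>pos by (smt (verit) atLeastAtMost_iff mult_left_mono of_nat_le_iff)
          have "real k \<le> \<bar>Y j \<omega>\<bar> / \<delta>" using j \<delta>pos by (simp add: field_simps)
          hence "real k powr r \<le> (\<bar>Y j \<omega>\<bar> / \<delta>) powr r" using r_pos by (intro powr_mono2) auto
          hence "real k powr r \<le> real j powr r + (\<bar>Y j \<omega>\<bar> / \<delta>) powr r" using powr_ge_zero[of "real j" r] by linarith
          hence "ennreal (real k powr r) \<le> aterm \<delta> (j - 1) \<omega>"
            unfolding aterm_def jS using ind by (simp add: ennreal_leI del: ennreal_plus)
          also have "\<dots> \<le> Asum" unfolding Asum_def by (rule term_le)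
          also have "\<dots> \<le> R \<omega>" unfolding Rw by (simp add: add.commute add.left_commute)
          finally show ?thesis .
        qed
      qed
    qed
  qed
qed

end

lemma deriv_line:
  fixes f :: "real^'n \<Rightarrow> real" and G :: "real^'n \<Rightarrow> real^'n"
  assumes "(f has_derivative (\<lambda>v. G y \<bullet> v)) (at y)" and "y = p + s *\<^sub>R k"
  shows "((\<lambda>u. f (p + u *\<^sub>R k)) has_real_derivative (G y \<bullet> k)) (at s)"
proof -
  have inner: "((\<lambda>u. p + u *\<^sub>R k) has_derivative (\<lambda>u. u *\<^sub>R k)) (at s)"
    by (auto intro!: derivative_eq_intros)
  have "((\<lambda>u. f (p + u *\<^sub>R k)) has_derivative (\<lambda>u. G y \<bullet> (u *\<^sub>R k))) (at s)"
    using diff_chain_at[OF inner, of f "\<lambda>v. G y \<bullet> v"] assms by (simp add: o_def)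
  moreover have "(\<lambda>u. G y \<bullet> (u *\<^sub>R k)) = (*) (G y \<bullet> k)" by (auto simp: fun_eq_iff)
  ultimately show ?thesis by (simp add: has_field_derivative_def)
qed

lemma hess_one_side:
  fixes f :: "real^'n \<Rightarrow> real" and G :: "real^'n \<Rightarrow> real^'n" and H :: "real^'n^'n"
  assumes U: "open U" "x \<in> U"
    and grad: "\<And>y. y \<in> U \<Longrightarrow> (f has_derivative (\<lambda>v. G y \<bullet> v)) (at y)"
    and hess: "(G has_derivative (\<lambda>v. H *v v)) (at x)"
    and e: "e > 0"
  shows "\<exists>d>0. \<forall>t. 0 < t \<and> t < d \<longrightarrow>
     \<bar>(f (x + t *\<^sub>R h + t *\<^sub>R k) - f (x + t *\<^sub>R h) - f (x + t *\<^sub>R k) + f x) - t\<^sup>2 * (k \<bullet> (H *v h))\<bar>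
       \<le> t\<^sup>2 * (e * (norm k * (norm h + 2 * norm k)))"
proof -
  obtain d1 where d1: "d1 > 0" "\<forall>y. norm (y - x) < d1 \<longrightarrow> norm (G y - G x - H *v (y - x)) \<le> e * norm (y - x)"
    using hess e unfolding has_derivative_at_alt by blast
  obtain d0 where d0: "d0 > 0" "ball x d0 \<subseteq> U" using U open_contains_ball by blast
  define d where "d = min d1 d0 / (norm h + norm k + 1)"
  have hk: "0 < norm h + norm k + 1" using norm_ge_zero[of h] norm_ge_zero[of k] by linarith
  have dpos: "d > 0" using d0 d1 hk by (simp add: d_def)
  show ?thesis
  proof (intro exI[of _ d] conjI allI impI dpos)
    fix t :: real assume t: "0 < t \<and> t < d"
    have tsmall: "t * (norm h + norm k) < min d1 d0"
    proof -
      have "t * (norm h + norm k) \<le> t * (norm h + norm k + 1)" using t by simp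
      also have "\<dots> < d * (norm h + norm k + 1)" using t hk by (intro mult_strict_right_mono) auto
      also have "\<dots> = min d1 d0" using hk by (simp add: d_def)
      finally show ?thesis .
    qed
    have nrm: "norm (u *\<^sub>R h + s *\<^sub>R k) < min d1 d0" if "0 \<le> u" "u \<le> t" "0 \<le> s" "s \<le> t" for u s
    proof -
      have "norm (u *\<^sub>R h + s *\<^sub>R k) \<le> u * norm h + s * norm k"
        using that norm_triangle_ineq[of "u *\<^sub>R h" "s *\<^sub>R k"] by simp
      also have "\<dots> \<le> t * norm h + t * norm k" using that by (intro add_mono mult_right_mono) auto
      finally show ?thesis using tsmall by (simp add: distrib_left)
    qed
    define \<phi> where "\<phi> s = f (x + t *\<^sub>R h + s *\<^sub>R k) - f (x + s *\<^sub>R k)" for s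
    have der: "(\<phi> has_real_derivative ((G (x + t *\<^sub>R h + s *\<^sub>R k) - G (x + s *\<^sub>R k)) \<bullet> k)) (at s)"
      if "0 \<le> s" "s \<le> t" for s
    proof -
      have "dist x (x + t *\<^sub>R h + s *\<^sub>R k) < d0"
        using nrm[of t s] that t by (subst dist_commute) (simp add: dist_norm)
      hence in1: "x + t *\<^sub>R h + s *\<^sub>R k \<in> U" using d0 by auto
      have "dist x (x + s *\<^sub>R k) < d0"
        using nrm[of 0 s] that t by (subst dist_commute) (simp add: dist_norm)
      hence in2: "x + s *\<^sub>R k \<in> U" using d0 by auto
      have a: "((\<lambda>u. f ((x + t *\<^sub>R h) + u *\<^sub>R k)) has_real_derivative (G (x + t *\<^sub>R h + s *\<^sub>R k) \<bullet> k)) (at s)"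
        by (rule deriv_line[where G=G and y="x + t *\<^sub>R h + s *\<^sub>R k" and p="x + t *\<^sub>R h", OF grad[OF in1]]) simp
      have b: "((\<lambda>u. f (x + u *\<^sub>R k)) has_real_derivative (G (x + s *\<^sub>R k) \<bullet> k)) (at s)"
        by (rule deriv_line[where G=G and y="x + s *\<^sub>R k" and p="x", OF grad[OF in2]]) simp
      show ?thesis unfolding \<phi>_def using DERIV_diff[OF a b] by (simp add: inner_diff_left)
    qed
    obtain \<xi> where \<xi>: "0 < \<xi>" "\<xi> < t" "\<phi> t - \<phi> 0 = (t - 0) * ((G (x + t *\<^sub>R h + \<xi> *\<^sub>R k) - G (x + \<xi> *\<^sub>R k)) \<bullet> k)"
      using MVT2[of 0 t \<phi> "\<lambda>s. (G (x + t *\<^sub>R h + s *\<^sub>R k) - G (x + s *\<^sub>R k)) \<bullet> k"] der t by auto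
    have Deq: "f (x + t *\<^sub>R h + t *\<^sub>R k) - f (x + t *\<^sub>R h) - f (x + t *\<^sub>R k) + f x = \<phi> t - \<phi> 0"
      by (simp add: \<phi>_def)
    define y1 where "y1 = x + t *\<^sub>R h + \<xi> *\<^sub>R k"
    define y2 where "y2 = x + \<xi> *\<^sub>R k"
    have e1: "norm (G y1 - G x - H *v (y1 - x)) \<le> e * norm (y1 - x)"
      using d1(2)[rule_format, of y1] nrm[of t \<xi>] \<xi> t by (simp add: y1_def add.assoc)
    have e2: "norm (G y2 - G x - H *v (y2 - x)) \<le> e * norm (y2 - x)"
      using d1(2)[rule_format, of y2] nrm[of 0 \<xi>] \<xi> t by (simp add: y2_def)
    have n1: "norm (y1 - x) \<le> t * norm h + t * norm k"
    proof -
      have "norm (y1 - x) \<le> t * norm h + \<xi> * norm k"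
        using norm_triangle_ineq[of "t *\<^sub>R h" "\<xi> *\<^sub>R k"] \<xi> t by (simp add: y1_def)
      also have "\<dots> \<le> t * norm h + t * norm k" using \<xi> by (intro add_mono mult_right_mono) auto
      finally show ?thesis .
    qed
    have n2: "norm (y2 - x) \<le> t * norm k" using \<xi> by (simp add: y2_def mult_right_mono)
    have lin: "H *v (y1 - x) - H *v (y2 - x) = t *\<^sub>R (H *v h)"
      by (simp add: y1_def y2_def matrix_vector_mult_diff_distrib[symmetric] matrix_vector_right_distrib matrix_vector_mult_scaleR)
    have "(G y1 - G y2) \<bullet> k - t * (k \<bullet> (H *v h)) =
          (G y1 - G x - H *v (y1 - x)) \<bullet> k - (G y2 - G x - H *v (y2 - x)) \<bullet> k"
      using lin by (simp add: inner_diff_left inner_commute algebra_simps)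
    hence "\<bar>(G y1 - G y2) \<bullet> k - t * (k \<bullet> (H *v h))\<bar> \<le>
           norm (G y1 - G x - H *v (y1 - x)) * norm k + norm (G y2 - G x - H *v (y2 - x)) * norm k"
      by (smt (verit, best) Cauchy_Schwarz_ineq2)
    also have "\<dots> \<le> e * (t * norm h + t * norm k) * norm k + e * (t * norm k) * norm k"
      using e1 e2 n1 n2 e by (intro add_mono mult_right_mono) (auto intro: order_trans mult_left_mono)
    also have "\<dots> = t * (e * (norm k * (norm h + 2 * norm k)))" by (simp add: algebra_simps)
    finally have B: "\<bar>(G y1 - G y2) \<bullet> k - t * (k \<bullet> (H *v h))\<bar> \<le> t * (e * (norm k * (norm h + 2 * norm k)))" .
    have "\<bar>(\<phi> t - \<phi> 0) - t\<^sup>2 * (k \<bullet> (H *v h))\<bar> = t * \<bar>(G y1 - G y2) \<bullet> k - t * (k \<bullet> (H *v h))\<bar>"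
    proof -
      have "(\<phi> t - \<phi> 0) - t\<^sup>2 * (k \<bullet> (H *v h)) = t * ((G y1 - G y2) \<bullet> k - t * (k \<bullet> (H *v h)))"
        using \<xi>(3) by (simp add: y1_def y2_def power2_eq_square algebra_simps)
      thus ?thesis using t by (simp add: abs_mult)
    qed
    also have "\<dots> \<le> t * (t * (e * (norm k * (norm h + 2 * norm k))))" using B t by (intro mult_left_mono) auto
    finally show "\<bar>(f (x + t *\<^sub>R h + t *\<^sub>R k) - f (x + t *\<^sub>R h) - f (x + t *\<^sub>R k) + f x) - t\<^sup>2 * (k \<bullet> (H *v h))\<bar>
       \<le> t\<^sup>2 * (e * (norm k * (norm h + 2 * norm k)))" unfolding Deq by (simp add: power2_eq_square mult.assoc)
  qed
qed

lemma hessian_symmetric: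
  fixes f :: "real^'n \<Rightarrow> real" and G :: "real^'n \<Rightarrow> real^'n" and H :: "real^'n^'n"
  assumes U: "open U" "x \<in> U"
    and grad: "\<And>y. y \<in> U \<Longrightarrow> (f has_derivative (\<lambda>v. G y \<bullet> v)) (at y)"
    and hess: "(G has_derivative (\<lambda>v. H *v v)) (at x)"
  shows "k \<bullet> (H *v h) = h \<bullet> (H *v k)"
proof (rule ccontr)
  assume ne: "k \<bullet> (H *v h) \<noteq> h \<bullet> (H *v k)"
  define \<Delta> where "\<Delta> = \<bar>k \<bullet> (H *v h) - h \<bullet> (H *v k)\<bar>"
  have \<Delta>: "\<Delta> > 0" using ne by (simp add: \<Delta>_def)
  define C1 where "C1 = norm k * (norm h + 2 * norm k)"
  define C2 where "C2 = norm h * (norm k + 2 * norm h)"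
  have C: "C1 \<ge> 0" "C2 \<ge> 0" by (simp_all add: C1_def C2_def)
  define e where "e = \<Delta> / (2 * (C1 + C2 + 1))"
  have e: "e > 0" using \<Delta> C by (simp add: e_def)
  obtain d1 where d1: "d1 > 0" "\<forall>t. 0 < t \<and> t < d1 \<longrightarrow>
     \<bar>(f (x + t *\<^sub>R h + t *\<^sub>R k) - f (x + t *\<^sub>R h) - f (x + t *\<^sub>R k) + f x) - t\<^sup>2 * (k \<bullet> (H *v h))\<bar>
       \<le> t\<^sup>2 * (e * C1)"
    using hess_one_side[OF U grad hess e, of h k] unfolding C1_def by blast
  obtain d2 where d2: "d2 > 0" "\<forall>t. 0 < t \<and> t < d2 \<longrightarrow>
     \<bar>(f (x + t *\<^sub>R k + t *\<^sub>R h) - f (x + t *\<^sub>R k) - f (x + t *\<^sub>R h) + f x) - t\<^sup>2 * (h \<bullet> (H *v k))\<bar>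
       \<le> t\<^sup>2 * (e * C2)"
    using hess_one_side[OF U grad hess e, of k h] unfolding C2_def by blast
  define t where "t = min d1 d2 / 2"
  have t: "0 < t" "t < d1" "t < d2" using d1 d2 by (auto simp: t_def)
  define D where "D = f (x + t *\<^sub>R h + t *\<^sub>R k) - f (x + t *\<^sub>R h) - f (x + t *\<^sub>R k) + f x"
  have D2: "f (x + t *\<^sub>R k + t *\<^sub>R h) - f (x + t *\<^sub>R k) - f (x + t *\<^sub>R h) + f x = D"
    by (simp add: D_def add_ac)
  have b1: "\<bar>D - t\<^sup>2 * (k \<bullet> (H *v h))\<bar> \<le> t\<^sup>2 * (e * C1)" using d1(2) t unfolding D_def by blast
  have b2: "\<bar>D - t\<^sup>2 * (h \<bullet> (H *v k))\<bar> \<le> t\<^sup>2 * (e * C2)" using d2(2) t D2 by metis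
  have "t\<^sup>2 * \<Delta> = \<bar>(D - t\<^sup>2 * (h \<bullet> (H *v k))) - (D - t\<^sup>2 * (k \<bullet> (H *v h)))\<bar>"
  proof -
    have "(D - t\<^sup>2 * (h \<bullet> (H *v k))) - (D - t\<^sup>2 * (k \<bullet> (H *v h))) = t\<^sup>2 * (k \<bullet> (H *v h) - h \<bullet> (H *v k))"
      by (simp add: algebra_simps)
    thus ?thesis by (simp add: \<Delta>_def abs_mult)
  qed
  also have "\<dots> \<le> t\<^sup>2 * (e * C1) + t\<^sup>2 * (e * C2)" using b1 b2 by linarith
  also have "\<dots> = t\<^sup>2 * (e * (C1 + C2))" by (simp add: algebra_simps)
  also have "\<dots> < t\<^sup>2 * \<Delta>"
  proof (rule mult_strict_left_mono)
    have "e * (C1 + C2) < e * (2 * (C1 + C2 + 1))" using e C by (intro mult_strict_left_mono) auto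
    also have "\<dots> = \<Delta>" using C by (simp add: e_def)
    finally show "e * (C1 + C2) < \<Delta>" .
  qed (use t in simp)
  finally show False by simp
qed


lemma real_eigenvalues_finite:
  fixes A :: "real^'n^'n"
  assumes sym: "\<And>x y. x \<bullet> (A *v y) = y \<bullet> (A *v x)"
  shows "finite (real_eigenvalues A)"
proof (rule ccontr)
  assume inf: "infinite (real_eigenvalues A)"
  define ev where "ev c = (SOME v. v \<noteq> 0 \<and> A *v v = c *\<^sub>R v)" for c
  have ev: "ev c \<noteq> 0 \<and> A *v ev c = c *\<^sub>R ev c" if "c \<in> real_eigenvalues A" for c
  proof -
    from that have "\<exists>v. v \<noteq> 0 \<and> A *v v = c *\<^sub>R v" by (simp add: real_eigenvalues_def)
    thus ?thesis unfolding ev_def by (rule someI_ex)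
  qed
  have orth: "ev c1 \<bullet> ev c2 = 0" if "c1 \<in> real_eigenvalues A" "c2 \<in> real_eigenvalues A" "c1 \<noteq> c2" for c1 c2
  proof -
    have "c2 * (ev c1 \<bullet> ev c2) = ev c1 \<bullet> (A *v ev c2)" using ev[OF that(2)] by simp
    also have "\<dots> = ev c2 \<bullet> (A *v ev c1)" by (rule sym)
    also have "\<dots> = c1 * (ev c1 \<bullet> ev c2)" using ev[OF that(1)] by (simp add: inner_commute)
    finally have "c2 * (ev c1 \<bullet> ev c2) = c1 * (ev c1 \<bullet> ev c2)" .
    thus ?thesis using that(3) by auto
  qed
  obtain B where B: "finite B" "card B = CARD('n) + 1" "B \<subseteq> real_eigenvalues A"
    using infinite_arbitrarily_large[OF inf] by blast
  have inj: "inj_on ev B"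
  proof (rule inj_onI)
    fix c1 c2 assume c: "c1 \<in> B" "c2 \<in> B" "ev c1 = ev c2"
    show "c1 = c2"
    proof (rule ccontr)
      assume "c1 \<noteq> c2"
      hence "ev c1 \<bullet> ev c1 = 0" using orth[of c1 c2] c B(3) by auto
      thus False using ev[of c1] c B(3) by auto
    qed
  qed
  have po: "pairwise orthogonal (ev ` B)"
    unfolding pairwise_def orthogonal_def using orth B(3) by fastforce
  have "0 \<notin> ev ` B" using ev B(3) by fastforce
  hence "independent (ev ` B)" by (rule pairwise_orthogonal_independent[OF po])
  hence "card (ev ` B) \<le> DIM(real^'n)" using independent_bound by blast
  moreover have "card (ev ` B) = CARD('n) + 1" using card_image[OF inj] B(2) by simp
  ultimately show False by simp
qed

lemma psd_from_lambda_min: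
  fixes A :: "real^'n^'n"
  assumes sym: "\<And>x y. x \<bullet> (A *v y) = y \<bullet> (A *v x)"
    and lm: "lambda_min A \<ge> s"
  shows "v \<bullet> (A *v v) \<ge> s * (norm v)\<^sup>2"
proof -
  define q where "q x = x \<bullet> (A *v x)" for x
  have qcont: "continuous_on (sphere 0 1) q"
    unfolding q_def by (intro continuous_intros linear_continuous_on) (auto intro: matrix_vector_mul_linear)
  have ne: "sphere (0::real^'n) 1 \<noteq> {}"
    by (simp add: sphere_eq_empty)
  obtain v0 where v0: "v0 \<in> sphere 0 1" "\<And>y. y \<in> sphere 0 1 \<Longrightarrow> q v0 \<le> q y"
    using continuous_attains_inf[OF compact_sphere ne qcont] by blast
  define \<mu> where "\<mu> = q v0"
  have nv0: "norm v0 = 1" using v0 by simp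
  have qge: "q x \<ge> \<mu> * (norm x)\<^sup>2" for x
  proof (cases "x = 0")
    case True thus ?thesis by (simp add: q_def)
  next
    case False
    define u where "u = x /\<^sub>R norm x"
    have "u \<in> sphere 0 1" using False by (simp add: u_def)
    hence "\<mu> \<le> q u" using v0 by (simp add: \<mu>_def)
    also have "q u = q x / (norm x)\<^sup>2"
      using False by (simp add: q_def u_def matrix_vector_mult_scaleR power2_eq_square field_simps)
    finally show ?thesis using False by (simp add: field_simps)
  qed
  have eig: "A *v v0 = \<mu> *\<^sub>R v0"
  proof (rule ccontr)
    assume neq: "A *v v0 \<noteq> \<mu> *\<^sub>R v0"
    define w where "w = A *v v0 - \<mu> *\<^sub>R v0"
    have wpos: "(norm w)\<^sup>2 > 0" using neq by (simp add: w_def)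
    define C where "C = q w - \<mu> * (norm w)\<^sup>2"
    have expand: "q (v0 + t *\<^sub>R w) - \<mu> * (norm (v0 + t *\<^sub>R w))\<^sup>2 = 2 * t * (norm w)\<^sup>2 + t\<^sup>2 * C" for t
    proof -
      have s1: "w \<bullet> (A *v v0) - \<mu> * (v0 \<bullet> w) = (norm w)\<^sup>2"
        by (simp add: w_def power2_norm_eq_inner inner_diff_left inner_diff_right inner_commute) (simp add: algebra_simps)
      have s2: "v0 \<bullet> (A *v w) = w \<bullet> (A *v v0)" by (rule sym)
      have "q (v0 + t *\<^sub>R w) = q v0 + t * (v0 \<bullet> (A *v w)) + t * (w \<bullet> (A *v v0)) + t\<^sup>2 * q w"
        by (simp add: q_def matrix_vector_right_distrib matrix_vector_mult_scaleR inner_add_left inner_add_right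
            power2_eq_square algebra_simps)
      moreover have "(norm (v0 + t *\<^sub>R w))\<^sup>2 = 1 + 2 * t * (v0 \<bullet> w) + t\<^sup>2 * (norm w)\<^sup>2"
      proof -
        have "(norm (v0 + t *\<^sub>R w))\<^sup>2 = (v0 + t *\<^sub>R w) \<bullet> (v0 + t *\<^sub>R w)" by (simp add: power2_norm_eq_inner)
        also have "\<dots> = v0 \<bullet> v0 + 2 * t * (v0 \<bullet> w) + t\<^sup>2 * (w \<bullet> w)"
          by (simp add: inner_add_left inner_add_right inner_commute power2_eq_square algebra_simps)
        also have "v0 \<bullet> v0 = 1" using nv0 by (simp add: power2_norm_eq_inner[symmetric])
        also have "w \<bullet> w = (norm w)\<^sup>2" by (simp add: power2_norm_eq_inner)
        finally show ?thesis .
      qed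
      ultimately show ?thesis using s1 s2
        by (simp add: C_def \<mu>_def algebra_simps power2_eq_square)
    qed
    define t where "t = - (norm w)\<^sup>2 / (\<bar>C\<bar> + 1)"
    have tneg: "t < 0" using wpos by (simp add: t_def add_pos_nonneg)
    have "0 \<le> q (v0 + t *\<^sub>R w) - \<mu> * (norm (v0 + t *\<^sub>R w))\<^sup>2" using qge[of "v0 + t *\<^sub>R w"] by simp
    also have "\<dots> = t * (2 * (norm w)\<^sup>2 + t * C)" unfolding expand by (simp add: power2_eq_square algebra_simps)
    finally have "2 * (norm w)\<^sup>2 + t * C \<le> 0" using tneg by (simp add: zero_le_mult_iff)
    moreover have "t * C \<ge> - (norm w)\<^sup>2"
    proof -
      have "\<bar>t * C\<bar> = (norm w)\<^sup>2 * \<bar>C\<bar> / (\<bar>C\<bar> + 1)" by (simp add: t_def abs_mult)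
      also have "\<dots> \<le> (norm w)\<^sup>2" by (simp add: field_simps)
      finally show ?thesis by linarith
    qed
    ultimately show False using wpos by linarith
  qed
  have "\<mu> \<in> real_eigenvalues A" using eig nv0 unfolding real_eigenvalues_def by (auto intro!: exI[of _ v0])
  hence "lambda_min A \<le> \<mu>" unfolding lambda_min_def by (rule Min_le[OF real_eigenvalues_finite[OF sym]])
  hence "s \<le> \<mu>" using lm by linarith
  hence "s * (norm v)\<^sup>2 \<le> \<mu> * (norm v)\<^sup>2" by (intro mult_right_mono) auto
  also have "\<dots> \<le> q v" by (rule qge)
  finally show ?thesis by (simp add: q_def)
qed


lemma strong_concave_bound:
  fixes F :: "real^'n \<Rightarrow> real" and GF :: "real^'n \<Rightarrow> real^'n" and HL :: "real^'n \<Rightarrow> real^'n \<Rightarrow> real^'n"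
  assumes cv: "convex \<Theta>" and th: "\<theta> \<in> \<Theta>" and rh: "\<rho> \<in> \<Theta>" and sub: "\<Theta> \<subseteq> U"
    and gradF: "\<And>y. y \<in> U \<Longrightarrow> (F has_derivative (\<lambda>v. GF y \<bullet> v)) (at y)"
    and hessF: "\<And>y. y \<in> U \<Longrightarrow> (GF has_derivative HL y) (at y)"
    and conc: "\<And>y v. y \<in> \<Theta> \<Longrightarrow> v \<bullet> HL y v \<le> - c * (norm v)\<^sup>2"
    and mx: "F \<theta> \<le> F \<rho>"
  shows "c / 2 * (norm (\<rho> - \<theta>))\<^sup>2 \<le> GF \<theta> \<bullet> (\<rho> - \<theta>)"
proof -
  define D where "D = \<rho> - \<theta>"
  define K where "K = (norm D)\<^sup>2"
  define y where "y u = \<theta> + u *\<^sub>R D" for u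
  have yin: "y u \<in> \<Theta>" if "0 \<le> u" "u \<le> 1" for u
  proof -
    have "y u = (1 - u) *\<^sub>R \<theta> + u *\<^sub>R \<rho>" by (simp add: y_def D_def algebra_simps)
    thus ?thesis using cv th rh that unfolding convex_def by auto
  qed
  define g where "g u = F (y u)" for u
  define h where "h u = GF (y u) \<bullet> D" for u
  have line: "((\<lambda>u. \<theta> + u *\<^sub>R D) has_derivative (\<lambda>u. u *\<^sub>R D)) (at u)" for u
    by (auto intro!: derivative_eq_intros)
  have dg: "(g has_real_derivative h u) (at u)" if "0 \<le> u" "u \<le> 1" for u
  proof -
    have U: "y u \<in> U" using yin[OF that] sub by auto
    have "(g has_derivative (\<lambda>w. GF (y u) \<bullet> (w *\<^sub>R D))) (at u)"
      unfolding g_def y_def using diff_chain_at[OF line gradF[OF U[unfolded y_def]]] by (simp add: o_def)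
    moreover have "(\<lambda>w. GF (y u) \<bullet> (w *\<^sub>R D)) = (*) (h u)" by (auto simp: fun_eq_iff h_def)
    ultimately show ?thesis by (simp add: has_field_derivative_def)
  qed
  have dh: "(h has_real_derivative (HL (y u) D \<bullet> D)) (at u)" if "0 \<le> u" "u \<le> 1" for u
  proof -
    have U: "y u \<in> U" using yin[OF that] sub by auto
    have bl: "bounded_linear (HL (y u))" using hessF[OF U] by (rule has_derivative_bounded_linear)
    have "((\<lambda>w. GF (\<theta> + w *\<^sub>R D)) has_derivative (\<lambda>w. HL (y u) (w *\<^sub>R D))) (at u)"
      using diff_chain_at[OF line hessF[OF U[unfolded y_def]]] by (simp add: o_def y_def)
    hence "((\<lambda>w. GF (\<theta> + w *\<^sub>R D) \<bullet> D) has_derivative (\<lambda>w. HL (y u) (w *\<^sub>R D) \<bullet> D)) (at u)"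
      by (rule has_derivative_inner_left)
    moreover have "(\<lambda>w. HL (y u) (w *\<^sub>R D) \<bullet> D) = (*) (HL (y u) D \<bullet> D)"
      using linear_scale[OF bounded_linear.linear[OF bl]] by (auto simp: fun_eq_iff)
    ultimately show ?thesis by (simp add: has_field_derivative_def h_def[abs_def] y_def)
  qed
  have mdec: "h u + c * K * u \<le> h 0" if "0 \<le> u" "u \<le> 1" for u
  proof -
    have "(\<lambda>w. h w + c * K * w) 0 \<ge> (\<lambda>w. h w + c * K * w) u"
    proof (rule DERIV_nonpos_imp_nonincreasing[OF that(1)])
      fix x assume x: "0 \<le> x" "x \<le> u"
      have "((\<lambda>w. h w + c * K * w) has_real_derivative (HL (y x) D \<bullet> D + c * K)) (at x)"
        using dh[of x] x that by (auto intro!: derivative_eq_intros)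
      moreover have "HL (y x) D \<bullet> D + c * K \<le> 0"
        using conc[OF yin[of x], of D] x that by (simp add: K_def inner_commute)
      ultimately show "\<exists>d. ((\<lambda>w. h w + c * K * w) has_real_derivative d) (at x) \<and> d \<le> 0" by blast
    qed
    thus ?thesis by simp
  qed
  have kdec: "(\<lambda>w. g w - w * h 0 + c * K * w\<^sup>2 / 2) 1 \<le> (\<lambda>w. g w - w * h 0 + c * K * w\<^sup>2 / 2) 0"
  proof (rule DERIV_nonpos_imp_nonincreasing[where f="\<lambda>w. g w - w * h 0 + c * K * w\<^sup>2 / 2" and a=0 and b=1])
    fix x :: real assume x: "0 \<le> x" "x \<le> 1"
    have "((\<lambda>w. g w - w * h 0 + c * K * w\<^sup>2 / 2) has_real_derivative (h x - h 0 + c * K * x)) (at x)"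
      using dg[OF x] by (auto intro!: derivative_eq_intros simp: power2_eq_square algebra_simps)
    moreover have "h x - h 0 + c * K * x \<le> 0" using mdec[OF x] by linarith
    ultimately show "\<exists>d. ((\<lambda>w. g w - w * h 0 + c * K * w\<^sup>2 / 2) has_real_derivative d) (at x) \<and> d \<le> 0" by blast
  qed simp
  have "g 1 = F \<rho>" by (simp add: g_def y_def D_def)
  moreover have "g 0 = F \<theta>" by (simp add: g_def y_def)
  moreover have "h 0 = GF \<theta> \<bullet> D" by (simp add: h_def y_def)
  ultimately show ?thesis using kdec mx by (simp add: K_def D_def)
qed


lemma last_exit_pow_le:
  assumes r: "r > 0" and bnd: "\<And>k. k \<in> last_exit eps X Y \<omega> \<Longrightarrow> ennreal (real k powr r) \<le> R"
  shows "last_exit_pow r eps X Y \<omega> \<le> R"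
proof (cases "finite (last_exit eps X Y \<omega>)")
  case True
  show ?thesis
  proof (cases "last_exit eps X Y \<omega> = {}")
    case True thus ?thesis by (simp add: last_exit_pow_def)
  next
    case False
    have "Sup (last_exit eps X Y \<omega>) \<in> last_exit eps X Y \<omega>"
      using \<open>finite _\<close> False by (simp add: cSup_eq_Max)
    thus ?thesis using bnd \<open>finite _\<close> by (simp add: last_exit_pow_def)
  qed
next
  case False
  have "R = \<infinity>"
  proof (rule ccontr)
    assume "R \<noteq> \<infinity>"
    then obtain x where x: "x \<ge> 0" "R = ennreal x" by (cases R) auto
    obtain k where k: "k > nat \<lceil>x powr (1/r)\<rceil>" "k \<in> last_exit eps X Y \<omega>"
      using False unfolding infinite_nat_iff_unbounded by blast
    have "x powr (1/r) < real k" using k(1) by linarith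
    hence "(x powr (1/r)) powr r < real k powr r" using r x by (intro powr_less_mono2) auto
    hence "x < real k powr r" using r x by (simp add: powr_powr)
    moreover have "real k powr r \<le> x" using bnd[OF k(2)] x by (simp add: ennreal_le_iff)
    ultimately show False by simp
  qed
  thus ?thesis by simp
qed

lemma orth_expand_bound:
  fixes B :: "(real^'n) set"
  assumes fin: "finite B" and po: "pairwise orthogonal B" and nrm: "\<And>e. e \<in> B \<Longrightarrow> norm e = 1"
    and D: "D \<in> span B"
  shows "S \<bullet> D \<le> norm D * (\<Sum>e\<in>B. \<bar>S \<bullet> e\<bar>)"
proof -
  define w where "w = D - (\<Sum>e\<in>B. (D \<bullet> e) *\<^sub>R e)"
  have ee: "e \<bullet> e = 1" if "e \<in> B" for e using nrm[OF that] by (simp add: power2_norm_eq_inner[symmetric])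
  have worth: "orthogonal w e'" if e': "e' \<in> B" for e'
  proof -
    have "(\<Sum>e\<in>B. (D \<bullet> e) *\<^sub>R e) \<bullet> e' = (\<Sum>e\<in>B. (D \<bullet> e) * (e \<bullet> e'))" by (simp add: inner_sum_left)
    also have "\<dots> = (\<Sum>e\<in>{e'}. (D \<bullet> e) * (e \<bullet> e'))"
    proof (rule sum.mono_neutral_right)
      show "\<forall>e\<in>B - {e'}. D \<bullet> e * (e \<bullet> e') = 0"
        using po e' unfolding pairwise_def orthogonal_def by auto
    qed (use fin e' in auto)
    also have "\<dots> = D \<bullet> e'" using ee[OF e'] by simp
    finally show ?thesis by (simp add: w_def orthogonal_def inner_diff_left)
  qed
  have "(\<Sum>e\<in>B. (D \<bullet> e) *\<^sub>R e) \<in> span B" by (intro span_sum span_scale span_base) auto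
  hence wspan: "w \<in> span B" unfolding w_def using D by (intro span_diff)
  have "orthogonal w w" by (rule orthogonal_to_span[OF wspan worth]) 
  hence w0: "w = 0" by (simp add: orthogonal_def)
  hence "D = (\<Sum>e\<in>B. (D \<bullet> e) *\<^sub>R e)" by (simp add: w_def)
  hence "S \<bullet> D = (\<Sum>e\<in>B. (D \<bullet> e) * (S \<bullet> e))" by (metis (no_types, lifting) inner_scaleR_right inner_sum_right sum.cong)
  also have "\<dots> \<le> (\<Sum>e\<in>B. norm D * \<bar>S \<bullet> e\<bar>)"
  proof (rule sum_mono)
    fix e assume e: "e \<in> B"
    have "\<bar>D \<bullet> e\<bar> \<le> norm D" using Cauchy_Schwarz_ineq2[of D e] nrm[OF e] by simp
    hence "(D \<bullet> e) * (S \<bullet> e) \<le> \<bar>D \<bullet> e\<bar> * \<bar>S \<bullet> e\<bar>" by (simp add: abs_mult[symmetric])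
    also have "\<dots> \<le> norm D * \<bar>S \<bullet> e\<bar>" using \<open>\<bar>D \<bullet> e\<bar> \<le> norm D\<close> by (intro mult_right_mono) auto
    finally show "(D \<bullet> e) * (S \<bullet> e) \<le> norm D * \<bar>S \<bullet> e\<bar>" .
  qed
  also have "\<dots> = norm D * (\<Sum>e\<in>B. \<bar>S \<bullet> e\<bar>)" by (simp add: sum_distrib_left)
  finally show ?thesis .
qed

lemma dir_score_meas:
  fixes p :: "'a \<Rightarrow> real^'d \<Rightarrow> real" and G :: "'a \<Rightarrow> real^'d \<Rightarrow> real^'d"
  assumes cv: "convex \<Theta>" and th: "\<theta> \<in> \<Theta>" and sub: "\<Theta> \<subseteq> U"
    and meas: "\<And>\<rho>. \<rho> \<in> \<Theta> \<Longrightarrow> (\<lambda>z. p z \<rho>) \<in> borel_measurable N"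
    and grad: "\<And>z \<rho>. z \<in> space N \<Longrightarrow> \<rho> \<in> U \<Longrightarrow> ((\<lambda>\<rho>'. ln (p z \<rho>')) has_derivative (\<lambda>h. G z \<rho> \<bullet> h)) (at \<rho>)"
    and v: "v \<in> span ((\<lambda>\<rho>. \<rho> - \<theta>) ` \<Theta>)"
  shows "(\<lambda>z. G z \<theta> \<bullet> v) \<in> borel_measurable N"
  using v
proof (induction rule: span_induct)
  case base
  show "subspace {v. (\<lambda>z. G z \<theta> \<bullet> v) \<in> borel_measurable N}"
    unfolding subspace_def by (auto simp: inner_add_right)
next
  case (step x)
  then obtain \<rho> where \<rho>: "\<rho> \<in> \<Theta>" "x = \<rho> - \<theta>" by auto
  define u where "u n = inverse (real (Suc n))" for n
  define q where "q n z = (ln (p z (\<theta> + u n *\<^sub>R x)) - ln (p z \<theta>)) / u n" for n z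
  have inT: "\<theta> + u n *\<^sub>R x \<in> \<Theta>" for n
  proof -
    have "\<theta> + u n *\<^sub>R x = (1 - u n) *\<^sub>R \<theta> + u n *\<^sub>R \<rho>" by (simp add: \<rho> algebra_simps)
    moreover have "0 \<le> u n" "u n \<le> 1" by (auto simp: u_def field_simps)
    ultimately show ?thesis using convexD[OF cv th \<rho>(1), of "1 - u n" "u n"] by simp
  qed
  have qm: "q n \<in> borel_measurable N" for n
    unfolding q_def using meas[OF inT] meas[OF th] by measurable
  show "(\<lambda>z. G z \<theta> \<bullet> x) \<in> borel_measurable N"
  proof (rule borel_measurable_LIMSEQ_real[OF _ qm])
    fix z assume z: "z \<in> space N"
    have thU: "\<theta> \<in> U" using th sub by auto
    have "((\<lambda>s. ln (p z (\<theta> + s *\<^sub>R x))) has_real_derivative (G z \<theta> \<bullet> x)) (at 0)"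
      by (rule deriv_line[where G="G z" and y=\<theta>, OF grad[OF z thU]]) simp
    hence lim: "((\<lambda>s. (ln (p z (\<theta> + s *\<^sub>R x)) - ln (p z \<theta>)) / s) \<longlongrightarrow> G z \<theta> \<bullet> x) (at 0)"
      unfolding has_field_derivative_iff by simp
    have useq: "filterlim u (at 0) sequentially"
    proof (rule filterlim_atI)
      show "(u \<longlongrightarrow> 0) sequentially" unfolding u_def by (rule LIMSEQ_inverse_real_of_nat)
      show "\<forall>\<^sub>F n in sequentially. u n \<noteq> 0" by (simp add: u_def)
    qed
    have "((\<lambda>n. (ln (p z (\<theta> + u n *\<^sub>R x)) - ln (p z \<theta>)) / u n) \<longlongrightarrow> G z \<theta> \<bullet> x) sequentially"
      using filterlim_compose[OF lim useq] by (simp add: o_def)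
    thus "(\<lambda>n. q n z) \<longlonglongrightarrow> G z \<theta> \<bullet> x" by (simp add: q_def)
  qed
qed


lemma neg_mat_mult: "(- A) *v v = - (A *v (v::real^'n))" for A :: "real^'n^'n"
  by (simp add: vec_eq_iff matrix_vector_mult_def sum_negf)

theorem mainTheorem6:
  fixes M :: "'o measure" and N :: "'a measure" and \<mu> :: "'a measure"
    and p :: "'a \<Rightarrow> real^'d \<Rightarrow> real"
    and G :: "'a \<Rightarrow> real^'d \<Rightarrow> real^'d"
    and H :: "'a \<Rightarrow> real^'d \<Rightarrow> real^'d^'d"
    and \<Theta> U :: "(real^'d) set"
    and \<theta> :: "real^'d" and r sigma2 :: real
    and Z :: "nat \<Rightarrow> 'o \<Rightarrow> 'a" and Zg :: "'o \<Rightarrow> 'a"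
    and thetahat :: "nat \<Rightarrow> 'o \<Rightarrow> real^'d"
  assumes r_pos: "r > 0"
    and Theta_compact: "compact \<Theta>" and Theta_convex: "convex \<Theta>"
    and base: "sets \<mu> = sets N"
    and dens_nonneg: "\<And>z \<rho>. z \<in> space N \<Longrightarrow> \<rho> \<in> \<Theta> \<Longrightarrow> p z \<rho> \<ge> 0"
    and dens_meas: "\<And>\<rho>. \<rho> \<in> \<Theta> \<Longrightarrow> (\<lambda>z. p z \<rho>) \<in> borel_measurable N"
    and dens_prob: "\<And>\<rho>. \<rho> \<in> \<Theta> \<Longrightarrow> prob_space (density \<mu> (\<lambda>z. ennreal (p z \<rho>)))"
    and U_open: "open U" and Theta_U: "\<Theta> \<subseteq> U"
    and grad: "\<And>z \<rho>. z \<in> space N \<Longrightarrow> \<rho> \<in> U \<Longrightarrow>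
                 ((\<lambda>\<rho>'. ln (p z \<rho>')) has_derivative (\<lambda>h. G z \<rho> \<bullet> h)) (at \<rho>)"
    and hess: "\<And>z \<rho>. z \<in> space N \<Longrightarrow> \<rho> \<in> U \<Longrightarrow>
                 (G z has_derivative (\<lambda>h. H z \<rho> *v h)) (at \<rho>)"
    and sigma_pos: "sigma2 > 0"
    and strong_conc: "\<And>z \<rho>. z \<in> space N \<Longrightarrow> \<rho> \<in> \<Theta> \<Longrightarrow> lambda_min (- H z \<rho>) \<ge> sigma2"
    and theta_in: "\<theta> \<in> \<Theta>"
    and M_prob: "prob_space M"
    and Z_meas: "\<And>s. s \<ge> 1 \<Longrightarrow> Z s \<in> measurable M N"
    and Z_indep: "prob_space.indep_vars M (\<lambda>_. N) Z {1..}"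
    and Z_distr: "\<And>s. s \<ge> 1 \<Longrightarrow> distr M N (Z s) = density \<mu> (\<lambda>z. ennreal (p z \<theta>))"
    and Zg_meas: "Zg \<in> measurable M N"
    and Zg_distr: "distr M N Zg = density \<mu> (\<lambda>z. ennreal (p z \<theta>))"
    and score_mean: "has_bochner_integral M (\<lambda>\<omega>. G (Zg \<omega>) \<theta>) 0"
    and score_moment: "integrable M (\<lambda>\<omega>. norm (G (Zg \<omega>) \<theta>) powr (r + 1))"
    and mle: "\<And>t \<omega>. t \<ge> 1 \<Longrightarrow> \<omega> \<in> space M \<Longrightarrow>
                 thetahat t \<omega> \<in> \<Theta> \<and>
                 (\<forall>\<rho>\<in>\<Theta>. (\<Sum>s\<in>{1..t}. ln (p (Z s \<omega>) \<rho>)) \<le> (\<Sum>s\<in>{1..t}. ln (p (Z s \<omega>) (thetahat t \<omega>))))"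
  shows "r_quickly M r thetahat (\<lambda>_. \<theta>)"
proof -
  interpret P: prob_space M by (rule M_prob)
  define V where "V = span ((\<lambda>\<rho>. \<rho> - \<theta>) ` \<Theta>)"
  obtain B where B: "B \<subseteq> V" "pairwise orthogonal B" "\<And>x. x \<in> B \<Longrightarrow> norm x = 1" "independent B" "span B = V"
    using orthonormal_basis_subspace[of V] unfolding V_def by (metis subspace_span)
  have finB: "finite B" using B(4) by (rule finiteI_independent)
  have gm: "(\<lambda>z. G z \<theta> \<bullet> e) \<in> borel_measurable N" if "e \<in> V" for e
    by (rule dir_score_meas[OF Theta_convex theta_in Theta_U dens_meas grad that[unfolded V_def]])
  define Ye where "Ye e s \<omega> = G (Z s \<omega>) \<theta> \<bullet> e" for e s \<omega>
  define Y0e where "Y0e e \<omega> = G (Zg \<omega>) \<theta> \<bullet> e" for e \<omega>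
  have iid: "iid_seq M (Ye e) (Y0e e) r" if e: "e \<in> B" for e
  proof -
    have gme[measurable]: "(\<lambda>z. G z \<theta> \<bullet> e) \<in> borel_measurable N" using gm e B(1) by auto
    have ne: "norm e = 1" using B(3) e by auto
    have ind: "P.indep_vars (\<lambda>_. borel) (Ye e) {1..}"
    proof -
      have "P.indep_vars (\<lambda>_. borel) (\<lambda>i x. (\<lambda>z. G z \<theta> \<bullet> e) (Z i x)) {1..}"
        by (rule P.indep_vars_compose2[OF Z_indep]) simp
      thus ?thesis by (simp add: Ye_def[abs_def])
    qed
    have Y0m: "Y0e e \<in> borel_measurable M"
      unfolding Y0e_def using measurable_compose[OF Zg_meas gme] by (simp add: o_def)
    have de: "distr M borel (Ye e s) = distr M borel (Y0e e)" if s: "s \<ge> 1" for s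
    proof -
      have "distr M borel (Ye e s) = distr (distr M N (Z s)) borel (\<lambda>z. G z \<theta> \<bullet> e)"
        using distr_distr[OF gme Z_meas[OF s]] by (simp add: o_def Ye_def[abs_def])
      also have "\<dots> = distr (distr M N Zg) borel (\<lambda>z. G z \<theta> \<bullet> e)" using Z_distr[OF s] Zg_distr by simp
      also have "\<dots> = distr M borel (Y0e e)"
        using distr_distr[OF gme Zg_meas] by (simp add: o_def Y0e_def[abs_def])
      finally show ?thesis .
    qed
    have Gm: "(\<lambda>\<omega>. G (Zg \<omega>) \<theta>) \<in> borel_measurable M"
      using borel_measurable_integrable[OF integrable.intros[OF score_mean]] .
    have mom: "integrable M (\<lambda>\<omega>. \<bar>Y0e e \<omega>\<bar> powr (r+1))"
    proof (rule Bochner_Integration.integrable_bound[OF score_moment])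
      show "(\<lambda>\<omega>. \<bar>Y0e e \<omega>\<bar> powr (r+1)) \<in> borel_measurable M" using Y0m by measurable
      show "AE x in M. norm (\<bar>Y0e e x\<bar> powr (r + 1)) \<le> norm (norm (G (Zg x) \<theta>) powr (r + 1))"
      proof (rule AE_I2)
        fix x
        have "\<bar>Y0e e x\<bar> \<le> norm (G (Zg x) \<theta>)"
          using Cauchy_Schwarz_ineq2[of "G (Zg x) \<theta>" e] ne by (simp add: Y0e_def)
        hence "\<bar>Y0e e x\<bar> powr (r+1) \<le> norm (G (Zg x) \<theta>) powr (r+1)"
          using r_pos by (intro powr_mono2) auto
        thus "norm (\<bar>Y0e e x\<bar> powr (r + 1)) \<le> norm (norm (G (Zg x) \<theta>) powr (r + 1))" by simp
      qed
    qed
    have mean: "P.expectation (Y0e e) = 0"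
    proof -
      have int: "integrable M (\<lambda>\<omega>. G (Zg \<omega>) \<theta>)" using score_mean by (rule integrable.intros)
      have "P.expectation (\<lambda>\<omega>. G (Zg \<omega>) \<theta>) = 0" using score_mean by (rule has_bochner_integral_integral_eq)
      thus ?thesis using int by (simp add: Y0e_def[abs_def])
    qed
    show ?thesis
      unfolding iid_seq_def iid_seq_axioms_def using M_prob r_pos ind Y0m de mom mean by blast
  qed
  show ?thesis
  unfolding r_quickly_def
  proof (intro allI impI)
    fix eps :: real assume eps: "eps > 0"
    define eps' where "eps' = eps * sigma2 / (2 * (real (card B) + 1))"
    have eps': "eps' > 0" using eps sigma_pos by (simp add: eps'_def add_pos_nonneg)
    have "\<forall>e\<in>B. \<exists>R. R \<in> borel_measurable M \<and> integral\<^sup>N M R < \<infinity> \<and>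
           (\<forall>\<omega>\<in>space M. \<forall>k\<ge>1. eps' * real k < \<bar>\<Sum>s\<in>{1..k}. Ye e s \<omega>\<bar> \<longrightarrow> ennreal (real k powr r) \<le> R \<omega>)"
      using iid_seq.core[OF iid eps'] by blast
    then obtain Rf where Rf: "\<And>e. e \<in> B \<Longrightarrow> Rf e \<in> borel_measurable M \<and> integral\<^sup>N M (Rf e) < \<infinity> \<and>
           (\<forall>\<omega>\<in>space M. \<forall>k\<ge>1. eps' * real k < \<bar>\<Sum>s\<in>{1..k}. Ye e s \<omega>\<bar> \<longrightarrow> ennreal (real k powr r) \<le> Rf e \<omega>)"
      by metis
    define R where "R \<omega> = (\<Sum>e\<in>B. Rf e \<omega>)" for \<omega>
    have intR: "integral\<^sup>N M R < \<infinity>"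
    proof -
      have "integral\<^sup>N M R = (\<Sum>e\<in>B. integral\<^sup>N M (Rf e))"
        unfolding R_def by (rule nn_integral_sum) (use Rf in auto)
      also have "\<dots> < \<infinity>" using Rf finB by (simp add: less_top[symmetric])
      finally show ?thesis .
    qed
    have key: "\<exists>e\<in>B. eps' * real k < \<bar>\<Sum>s\<in>{1..k}. Ye e s \<omega>\<bar>"
      if \<omega>: "\<omega> \<in> space M" and k: "k \<ge> 1" and far: "eps < norm (thetahat k \<omega> - \<theta>)" for \<omega> k
    proof (rule ccontr)
      assume nope: "\<not> ?thesis"
      have zs: "Z s \<omega> \<in> space N" if "s \<in> {1..k}" for s
        using measurable_space[OF Z_meas \<omega>] that by auto
      define F where "F \<rho> = (\<Sum>s\<in>{1..k}. ln (p (Z s \<omega>) \<rho>))" for \<rho>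
      define GF where "GF y = (\<Sum>s\<in>{1..k}. G (Z s \<omega>) y)" for y
      define HL where "HL y v = (\<Sum>s\<in>{1..k}. H (Z s \<omega>) y *v v)" for y v
      have mleK: "thetahat k \<omega> \<in> \<Theta>" "F \<theta> \<le> F (thetahat k \<omega>)"
        using mle[OF k \<omega>] theta_in by (auto simp: F_def)
      have gradF: "(F has_derivative (\<lambda>v. GF y \<bullet> v)) (at y)" if "y \<in> U" for y
      proof -
        have "(F has_derivative (\<lambda>v. \<Sum>s\<in>{1..k}. G (Z s \<omega>) y \<bullet> v)) (at y)"
          unfolding F_def[abs_def] by (rule has_derivative_sum) (use grad zs that in auto)
        thus ?thesis by (simp add: GF_def inner_sum_left)
      qed
      have hessF: "(GF has_derivative HL y) (at y)" if "y \<in> U" for y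
        unfolding GF_def[abs_def] HL_def[abs_def] by (rule has_derivative_sum) (use hess zs that in auto)
      have conc: "v \<bullet> HL y v \<le> - (real k * sigma2) * (norm v)\<^sup>2" if y: "y \<in> \<Theta>" for y v
      proof -
        have each: "v \<bullet> (H (Z s \<omega>) y *v v) \<le> - sigma2 * (norm v)\<^sup>2" if s: "s \<in> {1..k}" for s
        proof -
          have yU: "y \<in> U" using y Theta_U by auto
          have sym: "a \<bullet> (H (Z s \<omega>) y *v b) = b \<bullet> (H (Z s \<omega>) y *v a)" for a b
            by (rule hessian_symmetric[OF U_open yU grad[OF zs[OF s]] hess[OF zs[OF s] yU]])
          have sym2: "a \<bullet> ((- H (Z s \<omega>) y) *v b) = b \<bullet> ((- H (Z s \<omega>) y) *v a)" for a b
            using sym[of a b] by (simp add: neg_mat_mult)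
          have "sigma2 * (norm v)\<^sup>2 \<le> v \<bullet> ((- H (Z s \<omega>) y) *v v)"
            by (rule psd_from_lambda_min[OF sym2 strong_conc[OF zs[OF s] y]])
          thus ?thesis by (simp add: neg_mat_mult)
        qed
        have "v \<bullet> HL y v = (\<Sum>s\<in>{1..k}. v \<bullet> (H (Z s \<omega>) y *v v))" by (simp add: HL_def inner_sum_right)
        also have "\<dots> \<le> (\<Sum>s\<in>{1..k}. - sigma2 * (norm v)\<^sup>2)" by (rule sum_mono) (rule each)
        also have "\<dots> = - (real k * sigma2) * (norm v)\<^sup>2" by simp
        finally show ?thesis .
      qed
      define D where "D = thetahat k \<omega> - \<theta>"
      have sc: "real k * sigma2 / 2 * (norm D)\<^sup>2 \<le> GF \<theta> \<bullet> D"
        unfolding D_def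
        by (rule strong_concave_bound[OF Theta_convex theta_in mleK(1) Theta_U gradF hessF conc mleK(2)])
      have DV: "D \<in> span B" using mleK(1) B(5) by (auto simp: D_def V_def intro!: span_base)
      have ob: "GF \<theta> \<bullet> D \<le> norm D * (\<Sum>e\<in>B. \<bar>GF \<theta> \<bullet> e\<bar>)"
        by (rule orth_expand_bound[OF finB B(2) B(3) DV])
      have GFe: "GF \<theta> \<bullet> e = (\<Sum>s\<in>{1..k}. Ye e s \<omega>)" for e
        by (simp add: GF_def Ye_def inner_sum_left)
      have nD: "norm D > eps" using far by (simp add: D_def)
      have "(real k * sigma2 / 2 * norm D) * norm D \<le> (\<Sum>e\<in>B. \<bar>GF \<theta> \<bullet> e\<bar>) * norm D"
        using sc ob by (simp add: power2_eq_square mult.commute mult.left_commute)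
      hence A1: "real k * sigma2 / 2 * norm D \<le> (\<Sum>e\<in>B. \<bar>GF \<theta> \<bullet> e\<bar>)"
        by (rule mult_right_le_imp_le) (use nD eps in linarith)
      have "real k * sigma2 / 2 * eps < real k * sigma2 / 2 * norm D"
        using nD k sigma_pos by (intro mult_strict_left_mono) auto
      also note A1
      also have "(\<Sum>e\<in>B. \<bar>GF \<theta> \<bullet> e\<bar>) \<le> (\<Sum>e\<in>B. eps' * real k)"
        using nope by (intro sum_mono) (auto simp: GFe not_less)
      also have "\<dots> = real (card B) * eps' * real k" by simp
      also have "\<dots> \<le> real k * sigma2 / 2 * eps"
      proof -
        have "real (card B) * eps' = eps * sigma2 / 2 * (real (card B) / (real (card B) + 1))"
          by (simp add: eps'_def field_simps)
        also have "\<dots> \<le> eps * sigma2 / 2 * 1"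
          using eps sigma_pos by (intro mult_left_mono) auto
        finally have "real (card B) * eps' \<le> eps * sigma2 / 2" by simp
        hence "real (card B) * eps' * real k \<le> eps * sigma2 / 2 * real k" by (intro mult_right_mono) auto
        thus ?thesis by (simp add: mult_ac)
      qed
      finally show False by simp
    qed
    have "(\<integral>\<^sup>+ \<omega>. last_exit_pow r eps thetahat (\<lambda>_. \<theta>) \<omega> \<partial>M) \<le> integral\<^sup>N M R"
    proof (rule nn_integral_mono)
      fix \<omega> assume \<omega>: "\<omega> \<in> space M"
      show "last_exit_pow r eps thetahat (\<lambda>_. \<theta>) \<omega> \<le> R \<omega>"
      proof (rule last_exit_pow_le[OF r_pos])
        fix k assume "k \<in> last_exit eps thetahat (\<lambda>_. \<theta>) \<omega>"
        hence k: "k \<ge> 1" "eps < norm (thetahat k \<omega> - \<theta>)" by (auto simp: last_exit_def)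
        obtain e where e: "e \<in> B" "eps' * real k < \<bar>\<Sum>s\<in>{1..k}. Ye e s \<omega>\<bar>" using key[OF \<omega> k] by blast
        have "ennreal (real k powr r) \<le> Rf e \<omega>" using Rf[OF e(1)] \<omega> k e(2) by blast
        also have "\<dots> \<le> R \<omega>" unfolding R_def by (rule member_le_sum[OF e(1) _ finB]) auto
        finally show "ennreal (real k powr r) \<le> R \<omega>" .
      qed
    qed
    thus "(\<integral>\<^sup>+ \<omega>. last_exit_pow r eps thetahat (\<lambda>_. \<theta>) \<omega> \<partial>M) < \<infinity>" using intR by (rule le_less_trans)
  qed
qed


end
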